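(* Let $\rho,\sigma$ be quantum states on a $d$-dimensional Hilbert space with $[\rho,\sigma]=0$, and let $\rho',\sigma'$ be quantum states on a $d'$-dimensional Hilbert space with $[\rho',\sigma']=0$, where $\sigma$ and $\sigma'$ are both full-rank. For $1>\epsilon>0$ define $f_\sigma(\rho,\epsilon):=\sqrt{V(\rho\|\sigma)\left(2\epsilon^{-1}-1\right)}$ and analogously $f_{\sigma'}(\rho',\epsilon):=\sqrt{V(\rho'\|\sigma')\left(2\epsilon^{-1}-1\right)}$. If $$S(\rho\|\sigma)-f_\sigma(\rho,\epsilon)\;\geq\; S(\rho'\|\sigma')+f_{\sigma'}(\rho',\epsilon),$$ then $(\rho,\sigma)\succ_\epsilon(\rho',\sigma')$.
   Context: All logarithms are base 2. The relative entropy is $S(\rho\|\sigma)=\mathrm{Tr}(\rho(\log\rho-\log\sigma))$ and the relative variance (variance of relative surprisal) is $V(\rho\|\sigma)=\mathrm{Tr}\left(\rho(\log\rho-\log\sigma)^2\right)-S(\rho\|\sigma)^2$. The trace distance is $D(\rho,\tau)=\frac12\|\rho-\tau\|_1$. For pairs of states, $(\rho,\sigma)\succ(\rho',\sigma')$ means there exists a quantum channel $\mathcal E$ (from states on the first Hilbert space to states on the second) with $\mathcal E(\rho)=\rho'$ and $\mathcal E(\sigma)=\sigma'$. Moreover $(\rho,\sigma)\succ_\epsilon(\rho',\sigma')$ means there exists a state $\rho'_\epsilon$ with $(\rho,\sigma)\succ(\rho'_\epsilon,\sigma')$ and $D(\rho',\rho'_\epsilon)\le\epsilon$. *)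

theory Defs
  imports Complex_Main "Jordan_Normal_Form.Matrix"
begin

definition mtrace :: "complex mat \<Rightarrow> complex" where
  "mtrace A = (\<Sum>i<dim_row A. A $$ (i,i))"

definition cadj :: "complex mat \<Rightarrow> complex mat" where
  "cadj A = mat (dim_col A) (dim_row A) (\<lambda>(i,j). cnj (A $$ (j,i)))"

definition hermitian_mat :: "nat \<Rightarrow> complex mat \<Rightarrow> bool" where
  "hermitian_mat n A \<longleftrightarrow> A \<in> carrier_mat n n \<and> cadj A = A"

definition psd_mat :: "nat \<Rightarrow> complex mat \<Rightarrow> bool" where
  "psd_mat n A \<longleftrightarrow> hermitian_mat n A \<and>
     (\<forall>v \<in> carrier_vec n. 0 \<le> Re (map_vec cnj v \<bullet> (A *\<^sub>v v)))"

definition density_mat :: "nat \<Rightarrow> complex mat \<Rightarrow> bool" where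
  "density_mat n \<rho> \<longleftrightarrow> psd_mat n \<rho> \<and> mtrace \<rho> = 1"

definition unitary_mat :: "nat \<Rightarrow> complex mat \<Rightarrow> bool" where
  "unitary_mat n U \<longleftrightarrow> U \<in> carrier_mat n n \<and> cadj U * U = 1\<^sub>m n"

definition real_diag :: "nat \<Rightarrow> (nat \<Rightarrow> real) \<Rightarrow> complex mat" where
  "real_diag n lam = mat n n (\<lambda>(i,j). if i = j then complex_of_real (lam i) else 0)"

(* functional calculus for Hermitian matrices via a spectral decomposition
   A = U diag(lam) U^*; the result f(A) = U diag(f o lam) U^* does not depend
   on the chosen decomposition *)
definition mat_fun :: "(real \<Rightarrow> real) \<Rightarrow> complex mat \<Rightarrow> complex mat" where
  "mat_fun f A = (SOME B. \<exists>U lam. unitary_mat (dim_row A) U \<and>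
       A = U * real_diag (dim_row A) lam * cadj U \<and>
       B = U * real_diag (dim_row A) (\<lambda>i. f (lam i)) * cadj U)"

(* matrix logarithm, base 2 (on the kernel of a singular state the value is
   irrelevant for the quantities below) *)
definition mlog :: "complex mat \<Rightarrow> complex mat" where
  "mlog A = mat_fun (log 2) A"

definition rel_entropy :: "complex mat \<Rightarrow> complex mat \<Rightarrow> real" where
  "rel_entropy \<rho> \<sigma> = Re (mtrace (\<rho> * (mlog \<rho> - mlog \<sigma>)))"

definition rel_variance :: "complex mat \<Rightarrow> complex mat \<Rightarrow> real" where
  "rel_variance \<rho> \<sigma> =
     Re (mtrace (\<rho> * ((mlog \<rho> - mlog \<sigma>) * (mlog \<rho> - mlog \<sigma>)))) - (rel_entropy \<rho> \<sigma>)\<^sup>2"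

definition trace_norm :: "complex mat \<Rightarrow> real" where
  "trace_norm A = Re (mtrace (mat_fun sqrt (cadj A * A)))"

definition trace_dist :: "complex mat \<Rightarrow> complex mat \<Rightarrow> real" where
  "trace_dist \<rho> \<tau> = trace_norm (\<rho> - \<tau>) / 2"

(* (id_k \<otimes> E) applied to a (k*d) x (k*d) block matrix: E acts on each d x d block *)
definition ampliate :: "nat \<Rightarrow> nat \<Rightarrow> nat \<Rightarrow> (complex mat \<Rightarrow> complex mat) \<Rightarrow> complex mat \<Rightarrow> complex mat" where
  "ampliate d d' k E X = mat (k * d') (k * d') (\<lambda>(i,j).
      E (mat d d (\<lambda>(r,s). X $$ ((i div d') * d + r, (j div d') * d + s))) $$ (i mod d', j mod d'))"

definition quantum_channel :: "nat \<Rightarrow> nat \<Rightarrow> (complex mat \<Rightarrow> complex mat) \<Rightarrow> bool" where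
  "quantum_channel d d' E \<longleftrightarrow>
     (\<forall>A \<in> carrier_mat d d. E A \<in> carrier_mat d' d') \<and>
     (\<forall>A \<in> carrier_mat d d. \<forall>B \<in> carrier_mat d d. E (A + B) = E A + E B) \<and>
     (\<forall>c. \<forall>A \<in> carrier_mat d d. E (c \<cdot>\<^sub>m A) = c \<cdot>\<^sub>m E A) \<and>
     (\<forall>A \<in> carrier_mat d d. mtrace (E A) = mtrace A) \<and>
     (\<forall>k. \<forall>X. psd_mat (k * d) X \<longrightarrow> psd_mat (k * d') (ampliate d d' k E X))"

definition pair_majorizes :: "nat \<Rightarrow> nat \<Rightarrow> complex mat \<Rightarrow> complex mat \<Rightarrow> complex mat \<Rightarrow> complex mat \<Rightarrow> bool" where
  "pair_majorizes d d' \<rho> \<sigma> \<rho>' \<sigma>' \<longleftrightarrow>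
     (\<exists>E. quantum_channel d d' E \<and> E \<rho> = \<rho>' \<and> E \<sigma> = \<sigma>')"

definition pair_majorizes_approx :: "nat \<Rightarrow> nat \<Rightarrow> real \<Rightarrow> complex mat \<Rightarrow> complex mat \<Rightarrow> complex mat \<Rightarrow> complex mat \<Rightarrow> bool" where
  "pair_majorizes_approx d d' \<epsilon> \<rho> \<sigma> \<rho>' \<sigma>' \<longleftrightarrow>
     (\<exists>\<rho>e. density_mat d' \<rho>e \<and> pair_majorizes d d' \<rho> \<sigma> \<rho>e \<sigma>' \<and> trace_dist \<rho>' \<rho>e \<le> \<epsilon>)"

definition f_dev :: "complex mat \<Rightarrow> complex mat \<Rightarrow> real \<Rightarrow> real" where
  "f_dev \<rho> \<sigma> \<epsilon> = sqrt (rel_variance \<rho> \<sigma> * (2 / \<epsilon> - 1))"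

end

theory Submission
  imports Defs "Jordan_Normal_Form.Schur_Decomposition" "Jordan_Normal_Form.Spectral_Radius"
begin

lemma mult_idx:
  assumes "A \<in> carrier_mat n m" "B \<in> carrier_mat m p" "i < n" "j < p"
  shows "(A * B) $$ (i,j) = (\<Sum>k<m. A $$ (i,k) * B $$ (k,j))"
  using assms by (simp add: index_mult_mat scalar_prod_def atLeast0LessThan)

lemma mult_sq[simp]: "A \<in> carrier_mat n n \<Longrightarrow> B \<in> carrier_mat n n \<Longrightarrow> A * B \<in> carrier_mat n n"
  by auto

lemma minus_sq[simp]: "A \<in> carrier_mat n n \<Longrightarrow> B \<in> carrier_mat n n \<Longrightarrow> A - B \<in> carrier_mat n n"
  by auto

lemma assoc_sq: "A \<in> carrier_mat n n \<Longrightarrow> B \<in> carrier_mat n n \<Longrightarrow> C \<in> carrier_mat n n \<Longrightarrow> A * B * C = A * (B * C)"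
  by auto

lemma cadj_carrier[simp]: "A \<in> carrier_mat n m \<Longrightarrow> cadj A \<in> carrier_mat m n"
  by (simp add: cadj_def)

lemma cadj_dims[simp]: "dim_row (cadj A) = dim_col A" "dim_col (cadj A) = dim_row A"
  by (simp_all add: cadj_def)

lemma cadj_idx[simp]: "i < dim_col A \<Longrightarrow> j < dim_row A \<Longrightarrow> cadj A $$ (i,j) = cnj (A $$ (j,i))"
  by (simp add: cadj_def)

lemma cadj_cadj[simp]: "cadj (cadj A) = A"
  by (rule eq_matI) (auto simp: cadj_def)

lemma cadj_mult:
  assumes A: "A \<in> carrier_mat n m" and B: "B \<in> carrier_mat m p"
  shows "cadj (A * B) = cadj B * cadj A"
proof (rule eq_matI)
  fix i j assume i: "i < dim_row (cadj B * cadj A)" and j: "j < dim_col (cadj B * cadj A)"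
  have i': "i < p" and j': "j < n" using i j A B by auto
  have "cadj (A * B) $$ (i,j) = cnj ((A*B) $$ (j,i))" using i' j' A B by simp
  also have "\<dots> = (\<Sum>k<m. cnj (A $$ (j,k)) * cnj (B $$ (k,i)))"
    using mult_idx[OF A B j' i'] by simp
  also have "\<dots> = (cadj B * cadj A) $$ (i,j)"
    using mult_idx[OF cadj_carrier[OF B] cadj_carrier[OF A] i' j'] A B i' j'
    by (auto intro: sum.cong simp: mult.commute)
  finally show "cadj (A * B) $$ (i,j) = (cadj B * cadj A) $$ (i,j)" .
qed (use A B in auto)

lemma cadj_minus:
  assumes "A \<in> carrier_mat n m" "B \<in> carrier_mat n m"
  shows "cadj (A - B) = cadj A - cadj B"
  by (rule eq_matI) (use assms in auto)

lemma cadj_one[simp]: "cadj (1\<^sub>m n) = 1\<^sub>m n"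
  by (rule eq_matI) auto

lemma mtrace_comm:
  assumes A: "A \<in> carrier_mat n m" and B: "B \<in> carrier_mat m n"
  shows "mtrace (A * B) = mtrace (B * A)"
proof -
  have "mtrace (A * B) = (\<Sum>i<n. \<Sum>k<m. A $$ (i,k) * B $$ (k,i))"
    unfolding mtrace_def using A B by (simp del: index_mult_mat add: index_mult_mat(2,3) mult_idx[OF A B])
  also have "\<dots> = (\<Sum>k<m. \<Sum>i<n. B $$ (k,i) * A $$ (i,k))"
    by (subst sum.swap) (simp add: mult.commute)
  also have "\<dots> = mtrace (B * A)"
    unfolding mtrace_def using A B by (simp del: index_mult_mat add: index_mult_mat(2,3) mult_idx[OF B A])
  finally show ?thesis .
qed

lemma unitary_carrier: "unitary_mat n U \<Longrightarrow> U \<in> carrier_mat n n"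
  by (simp add: unitary_mat_def)

lemma unitary_left: "unitary_mat n U \<Longrightarrow> cadj U * U = 1\<^sub>m n"
  by (simp add: unitary_mat_def)

lemma unitary_right: "unitary_mat n U \<Longrightarrow> U * cadj U = 1\<^sub>m n"
  using mat_mult_left_right_inverse[of "cadj U" n U]
  by (simp add: unitary_mat_def)

lemma real_diag_carrier[simp]: "real_diag n f \<in> carrier_mat n n"
  by (simp add: real_diag_def)

lemma real_diag_dims[simp]: "dim_row (real_diag n f) = n" "dim_col (real_diag n f) = n"
  by (simp_all add: real_diag_def)

lemma real_diag_idx[simp]: "i < n \<Longrightarrow> j < n \<Longrightarrow> real_diag n f $$ (i,j) = (if i = j then complex_of_real (f i) else 0)"
  by (simp add: real_diag_def)

lemma real_diag_mult: "real_diag n f * real_diag n g = real_diag n (\<lambda>i. f i * g i)"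
proof (rule eq_matI)
  fix i j assume "i < dim_row (real_diag n (\<lambda>i. f i * g i))" "j < dim_col (real_diag n (\<lambda>i. f i * g i))"
  then have i: "i < n" and j: "j < n" by auto
  have "(real_diag n f * real_diag n g) $$ (i,j) = (\<Sum>k<n. real_diag n f $$ (i,k) * real_diag n g $$ (k,j))"
    by (rule mult_idx[OF real_diag_carrier real_diag_carrier i j])
  also have "\<dots> = (\<Sum>k\<in>{i}. real_diag n f $$ (i,k) * real_diag n g $$ (k,j))"
    by (rule sum.mono_neutral_right) (use i j in auto)
  finally show "(real_diag n f * real_diag n g) $$ (i,j) = real_diag n (\<lambda>i. f i * g i) $$ (i,j)"
    using i j by simp
qed auto

lemma real_diag_minus: "real_diag n f - real_diag n g = real_diag n (\<lambda>i. f i - g i)"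
  by (rule eq_matI) auto

lemma cadj_real_diag[simp]: "cadj (real_diag n f) = real_diag n f"
  by (rule eq_matI) auto

lemma mtrace_real_diag: "mtrace (real_diag n f) = complex_of_real (\<Sum>i<n. f i)"
  unfolding mtrace_def by simp

definition conj_by :: "complex mat \<Rightarrow> complex mat \<Rightarrow> complex mat" where
  "conj_by U X = U * X * cadj U"

lemma conj_by_carrier[simp]: "U \<in> carrier_mat n n \<Longrightarrow> X \<in> carrier_mat n n \<Longrightarrow> conj_by U X \<in> carrier_mat n n"
  unfolding conj_by_def by auto

lemma unitary_cancel1:
  assumes U: "unitary_mat n U" and Z: "Z \<in> carrier_mat n k"
  shows "cadj U * (U * Z) = Z"
proof -
  have Uc: "U \<in> carrier_mat n n" using U by (simp add: unitary_carrier)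
  have "cadj U * (U * Z) = (cadj U * U) * Z"
    using Uc Z by (simp add: assoc_mult_mat[of _ n n _ n _ k])
  then show ?thesis using unitary_left[OF U] Z by simp
qed

lemma unitary_cancel2:
  assumes U: "unitary_mat n U" and Z: "Z \<in> carrier_mat n k"
  shows "U * (cadj U * Z) = Z"
proof -
  have Uc: "U \<in> carrier_mat n n" using U by (simp add: unitary_carrier)
  have "U * (cadj U * Z) = (U * cadj U) * Z"
    using Uc Z by (simp add: assoc_mult_mat[of _ n n _ n _ k])
  then show ?thesis using unitary_right[OF U] Z by simp
qed

lemma unitary_cancel3:
  assumes U: "unitary_mat n U" and Z: "Z \<in> carrier_mat k n"
  shows "Z * cadj U * U = Z"
proof -
  have Uc: "U \<in> carrier_mat n n" using U by (simp add: unitary_carrier)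
  have "Z * cadj U * U = Z * (cadj U * U)"
    using Uc Z by (simp add: assoc_mult_mat[of _ k n _ n _ n])
  then show ?thesis using unitary_left[OF U] Z by simp
qed

lemma unitary_cancel4:
  assumes U: "unitary_mat n U" and Z: "Z \<in> carrier_mat k n"
  shows "Z * U * cadj U = Z"
proof -
  have Uc: "U \<in> carrier_mat n n" using U by (simp add: unitary_carrier)
  have "Z * U * cadj U = Z * (U * cadj U)"
    using Uc Z by (simp add: assoc_mult_mat[of _ k n _ n _ n])
  then show ?thesis using unitary_right[OF U] Z by simp
qed

lemma conj_by_mult:
  assumes U: "unitary_mat n U" and X: "X \<in> carrier_mat n n" and Y: "Y \<in> carrier_mat n n"
  shows "conj_by U X * conj_by U Y = conj_by U (X * Y)"
proof -
  have Uc: "U \<in> carrier_mat n n" using U by (simp add: unitary_carrier)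
  have "conj_by U X * conj_by U Y = U * (X * (cadj U * (U * (Y * cadj U))))"
    unfolding conj_by_def using Uc X Y
    by (simp add: assoc_sq[where n=n])
  also have "\<dots> = U * (X * Y) * cadj U"
    using Uc X Y by (simp add: unitary_cancel1[OF U, of "Y * cadj U" n] assoc_sq[where n=n])
  finally show ?thesis unfolding conj_by_def .
qed

lemma conj_by_minus:
  assumes U: "U \<in> carrier_mat n n" and X: "X \<in> carrier_mat n n" and Y: "Y \<in> carrier_mat n n"
  shows "conj_by U X - conj_by U Y = conj_by U (X - Y)"
proof -
  have "U * X * cadj U - U * Y * cadj U = (U * X - U * Y) * cadj U"
    by (rule minus_mult_distrib_mat[symmetric, of _ n n]) (use U X Y in auto)
  also have "U * X - U * Y = U * (X - Y)"
    by (rule mult_minus_distrib_mat[symmetric, of _ n n]) (use U X Y in auto)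
  finally show ?thesis unfolding conj_by_def .
qed

lemma conj_by_cadj:
  assumes U: "U \<in> carrier_mat n n" and X: "X \<in> carrier_mat n n"
  shows "cadj (conj_by U X) = conj_by U (cadj X)"
  unfolding conj_by_def using U X
  by (simp add: cadj_mult[of _ n n _ n] assoc_sq[where n=n])

lemma mtrace_conj_by:
  assumes U: "unitary_mat n U" and X: "X \<in> carrier_mat n n"
  shows "mtrace (conj_by U X) = mtrace X"
proof -
  have Uc: "U \<in> carrier_mat n n" using U by (simp add: unitary_carrier)
  have "mtrace (conj_by U X) = mtrace (cadj U * (U * X))"
    unfolding conj_by_def using Uc X by (simp add: mtrace_comm[of _ n n])
  also have "\<dots> = mtrace X" using unitary_cancel1[OF U X] by simp
  finally show ?thesis .
qed

lemma unconj_by: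
  assumes U: "unitary_mat n U" and X: "X \<in> carrier_mat n n"
  shows "cadj U * conj_by U X * U = X"
proof -
  have Uc: "U \<in> carrier_mat n n" using U by (simp add: unitary_carrier)
  have "cadj U * conj_by U X * U = cadj U * (U * (X * cadj U * U))"
    unfolding conj_by_def using Uc X by (simp add: assoc_sq[where n=n])
  then show ?thesis using unitary_cancel1[OF U] unitary_cancel3[OF U X] X Uc by simp
qed


lemma diag_left_idx:
  assumes M: "M \<in> carrier_mat n k" and i: "i < n" and j: "j < k"
  shows "(real_diag n mu * M) $$ (i,j) = complex_of_real (mu i) * M $$ (i,j)"
proof -
  have "(real_diag n mu * M) $$ (i,j) = (\<Sum>l<n. real_diag n mu $$ (i,l) * M $$ (l,j))"
    by (rule mult_idx[OF real_diag_carrier M i j])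
  also have "\<dots> = (\<Sum>l\<in>{i}. real_diag n mu $$ (i,l) * M $$ (l,j))"
    by (rule sum.mono_neutral_right) (use i in auto)
  finally show ?thesis using i by simp
qed

lemma diag_right_idx:
  assumes M: "M \<in> carrier_mat k n" and i: "i < k" and j: "j < n"
  shows "(M * real_diag n mu) $$ (i,j) = M $$ (i,j) * complex_of_real (mu j)"
proof -
  have "(M * real_diag n mu) $$ (i,j) = (\<Sum>l<n. M $$ (i,l) * real_diag n mu $$ (l,j))"
    by (rule mult_idx[OF M real_diag_carrier i j])
  also have "\<dots> = (\<Sum>l\<in>{j}. M $$ (i,l) * real_diag n mu $$ (l,j))"
    by (rule sum.mono_neutral_right) (use j in auto)
  finally show ?thesis using j by simp
qed

lemma diag_commute_fun:
  assumes M: "M \<in> carrier_mat n n"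
    and C: "real_diag n mu * M = M * real_diag n lam"
  shows "real_diag n (\<lambda>i. f (mu i)) * M = M * real_diag n (\<lambda>i. f (lam i))"
proof (rule eq_matI)
  fix i j assume "i < dim_row (M * real_diag n (\<lambda>i. f (lam i)))" "j < dim_col (M * real_diag n (\<lambda>i. f (lam i)))"
  then have i: "i < n" and j: "j < n" using M by auto
  have e: "complex_of_real (mu i) * M $$ (i,j) = M $$ (i,j) * complex_of_real (lam j)"
    using arg_cong[OF C, of "\<lambda>X. X $$ (i,j)"] diag_left_idx[OF M i j] diag_right_idx[OF M i j] by simp
  show "(real_diag n (\<lambda>i. f (mu i)) * M) $$ (i,j) = (M * real_diag n (\<lambda>i. f (lam i))) $$ (i,j)"
  proof (cases "M $$ (i,j) = 0")
    case True
    then show ?thesis by (simp add: diag_left_idx[OF M i j] diag_right_idx[OF M i j])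
  next
    case False
    then have "mu i = lam j" using e by (simp add: mult.commute)
    then show ?thesis by (simp add: diag_left_idx[OF M i j] diag_right_idx[OF M i j] mult.commute)
  qed
qed (use M in auto)

lemma mat_fun_eval:
  assumes U: "unitary_mat n U" and A: "A = U * real_diag n lam * cadj U"
  shows "mat_fun f A = U * real_diag n (\<lambda>i. f (lam i)) * cadj U"
proof -
  have Uc: "U \<in> carrier_mat n n" using U by (rule unitary_carrier)
  have dA: "dim_row A = n" using A Uc by simp
  define P where "P = (\<lambda>B. \<exists>W mu. unitary_mat (dim_row A) W \<and>
       A = W * real_diag (dim_row A) mu * cadj W \<and>
       B = W * real_diag (dim_row A) (\<lambda>i. f (mu i)) * cadj W)"
  have "P (U * real_diag n (\<lambda>i. f (lam i)) * cadj U)"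
    unfolding P_def dA using U A by blast
  then have "P (mat_fun f A)"
    unfolding mat_fun_def P_def[symmetric] by (rule someI)
  then obtain W mu where W: "unitary_mat n W" and AW: "A = W * real_diag n mu * cadj W"
    and B: "mat_fun f A = W * real_diag n (\<lambda>i. f (mu i)) * cadj W"
    unfolding P_def dA by blast
  have Wc: "W \<in> carrier_mat n n" using W by (rule unitary_carrier)
  define M where "M = cadj W * U"
  have Mc: "M \<in> carrier_mat n n" unfolding M_def using Uc Wc by simp
  have "real_diag n mu * M = cadj W * A * U"
  proof -
    have "cadj W * A * U = cadj W * (W * (real_diag n mu * (cadj W * U)))"
      unfolding AW using Wc Uc by (simp add: assoc_sq[where n=n])
    also have "\<dots> = real_diag n mu * M"
      unfolding M_def using Wc Uc by (simp add: unitary_cancel1[OF W, of _ n])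
    finally show ?thesis by simp
  qed
  also have "cadj W * A * U = M * real_diag n lam"
  proof -
    have "cadj W * A * U = cadj W * (U * (real_diag n lam * (cadj U * U)))"
      unfolding A using Wc Uc by (simp add: assoc_sq[where n=n])
    also have "\<dots> = M * real_diag n lam"
      unfolding M_def using Wc Uc unitary_left[OF U] by (simp add: assoc_sq[where n=n])
    finally show ?thesis .
  qed
  finally have C: "real_diag n mu * M = M * real_diag n lam" .
  have C2: "real_diag n (\<lambda>i. f (mu i)) * M = M * real_diag n (\<lambda>i. f (lam i))"
    by (rule diag_commute_fun[OF Mc C])
  have "W * real_diag n (\<lambda>i. f (mu i)) * cadj W = W * (real_diag n (\<lambda>i. f (mu i)) * (cadj W * U)) * cadj U"
    using Wc Uc unitary_right[OF U] by (simp add: assoc_sq[where n=n])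
  also have "\<dots> = W * (M * real_diag n (\<lambda>i. f (lam i))) * cadj U"
    using C2 unfolding M_def by simp
  also have "\<dots> = U * real_diag n (\<lambda>i. f (lam i)) * cadj U"
    unfolding M_def using Wc Uc by (simp add: assoc_sq[where n=n] unitary_cancel2[OF W, of _ n])
  finally show ?thesis using B by simp
qed


lemma cscalar_sum: "v \<in> carrier_vec n \<Longrightarrow> w \<in> carrier_vec n \<Longrightarrow> v \<bullet>c w = (\<Sum>k<n. v $ k * cnj (w $ k))"
  by (simp add: scalar_prod_def atLeast0LessThan)

lemma unitary_first_col:
  assumes v: "v \<in> carrier_vec n" and n: "0 < n" and v0: "v \<noteq> 0\<^sub>v n"
  shows "\<exists>W c. unitary_mat n W \<and> (\<forall>i<n. W $$ (i,0) = c * v $ i)"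
proof -
  interpret cof_vec_space n "TYPE(complex)" .
  define b where "b = basis_completion v"
  from basis_completion[OF v v0, folded b_def]
  have dist_b: "distinct b" and indep: "\<not> lin_dep (set b)" and bc: "set b \<subseteq> carrier_vec n"
    and hdb: "hd b = v" and len_b: "length b = n" by auto
  from hdb len_b n obtain vs where bv: "b = v # vs" by (cases b, auto)
  define ws where "ws = gram_schmidt n b"
  from gram_schmidt_result[OF bc dist_b indep refl, folded ws_def]
  have orth: "corthogonal ws" and wsc: "set ws \<subseteq> carrier_vec n" and len: "length ws = n"
    by (auto simp: len_b)
  from gram_schmidt_hd[OF v, of vs, folded bv] have hdws: "hd ws = v" unfolding ws_def .
  have ws0: "ws ! 0 = v" using hdws len n by (cases ws) auto
  have wsi: "ws ! i \<in> carrier_vec n" if "i < n" for i using wsc len that by auto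
  define c where "c = (\<lambda>j. 1 / sqrt (Re (ws ! j \<bullet>c ws ! j)))"
  have pos: "ws ! j \<bullet>c ws ! j > 0" if j: "j < n" for j
  proof -
    have "ws ! j \<bullet>c ws ! j \<noteq> 0" using corthogonalD[OF orth, of j j] j len by auto
    then have "ws ! j \<noteq> 0\<^sub>v n" using wsi[OF j] by auto
    then show ?thesis using conjugate_square_greater_0_vec[OF wsi[OF j]] by simp
  qed
  have realpos: "Im (ws ! j \<bullet>c ws ! j) = 0 \<and> Re (ws ! j \<bullet>c ws ! j) > 0" if "j < n" for j
    using pos[OF that] by (simp add: less_complex_def)
  define W where "W = mat n n (\<lambda>(i,j). complex_of_real (c j) * ws ! j $ i)"
  have Wc: "W \<in> carrier_mat n n" unfolding W_def by simp
  have "cadj W * W = 1\<^sub>m n"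
  proof (rule eq_matI)
    fix i j assume "i < dim_row (1\<^sub>m n :: complex mat)" "j < dim_col (1\<^sub>m n :: complex mat)"
    then have i: "i < n" and j: "j < n" by auto
    have "(cadj W * W) $$ (i,j) = (\<Sum>k<n. cnj (W $$ (k,i)) * W $$ (k,j))"
      using mult_idx[OF cadj_carrier[OF Wc] Wc i j] Wc i j by (simp add: cadj_def)
    also have "\<dots> = complex_of_real (c i) * complex_of_real (c j) * (\<Sum>k<n. ws ! j $ k * cnj (ws ! i $ k))"
      unfolding W_def using i j by (simp add: sum_distrib_left algebra_simps)
    also have "\<dots> = complex_of_real (c i) * complex_of_real (c j) * (ws ! j \<bullet>c ws ! i)"
      by (simp add: cscalar_sum[OF wsi[OF j] wsi[OF i]])
    also have "\<dots> = 1\<^sub>m n $$ (i,j)"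
    proof (cases "i = j")
      case True
      have re: "ws ! j \<bullet>c ws ! j = complex_of_real (Re (ws ! j \<bullet>c ws ! j))"
        using realpos[OF j] by (simp add: complex_eq_iff)
      have "complex_of_real (c j) * complex_of_real (c j) * complex_of_real (Re (ws ! j \<bullet>c ws ! j)) = 1"
        unfolding c_def using realpos[OF j] by (simp flip: of_real_mult)
      then show ?thesis using True i re by simp
    next
      case False
      then show ?thesis using corthogonalD[OF orth, of j i] i j len by simp
    qed
    finally show "(cadj W * W) $$ (i,j) = 1\<^sub>m n $$ (i,j)" .
  qed (use Wc in auto)
  then have "unitary_mat n W" unfolding unitary_mat_def using Wc by simp
  moreover have "\<forall>i<n. W $$ (i,0) = complex_of_real (c 0) * v $ i" unfolding W_def using n ws0 by simp
  ultimately show ?thesis by blast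
qed

lemma trip_idx:
  assumes A: "A \<in> carrier_mat n1 n2" and X: "X \<in> carrier_mat n2 n3" and C: "C \<in> carrier_mat n3 n4"
    and i: "i < n1" and j: "j < n4"
  shows "(A * X * C) $$ (i,j) = (\<Sum>k<n2. \<Sum>l<n3. A $$ (i,k) * X $$ (k,l) * C $$ (l,j))"
proof -
  have AX: "A * X \<in> carrier_mat n1 n3" using A X by simp
  have "(A * X * C) $$ (i,j) = (\<Sum>l<n3. (A * X) $$ (i,l) * C $$ (l,j))"
    by (rule mult_idx[OF AX C i j])
  also have "\<dots> = (\<Sum>l<n3. \<Sum>k<n2. A $$ (i,k) * X $$ (k,l) * C $$ (l,j))"
    by (intro sum.cong refl) (simp add: mult_idx[OF A X i] sum_distrib_right)
  also have "\<dots> = (\<Sum>k<n2. \<Sum>l<n3. A $$ (i,k) * X $$ (k,l) * C $$ (l,j))"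
    by (rule sum.swap)
  finally show ?thesis .
qed

definition ext1 :: "nat \<Rightarrow> complex mat \<Rightarrow> complex mat" where
  "ext1 m B = mat (Suc m) (Suc m) (\<lambda>(i,j). if i = 0 \<and> j = 0 then 1 else if i = 0 \<or> j = 0 then 0 else B $$ (i - 1, j - 1))"

lemma ext1_carrier[simp]: "ext1 m B \<in> carrier_mat (Suc m) (Suc m)"
  by (simp add: ext1_def)

lemma ext1_dims[simp]: "dim_row (ext1 m B) = Suc m" "dim_col (ext1 m B) = Suc m"
  by (simp_all add: ext1_def)

lemma ext1_idx[simp]:
  "ext1 m B $$ (0,0) = 1"
  "j < m \<Longrightarrow> ext1 m B $$ (0, Suc j) = 0"
  "i < m \<Longrightarrow> ext1 m B $$ (Suc i, 0) = 0"
  "i < m \<Longrightarrow> j < m \<Longrightarrow> ext1 m B $$ (Suc i, Suc j) = B $$ (i,j)"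
  by (simp_all add: ext1_def)

lemma ext1_unitary:
  assumes B: "unitary_mat m B"
  shows "unitary_mat (Suc m) (ext1 m B)"
proof -
  have Bc: "B \<in> carrier_mat m m" using B by (rule unitary_carrier)
  have BB: "cadj B * B = 1\<^sub>m m" using B by (rule unitary_left)
  have "cadj (ext1 m B) * ext1 m B = 1\<^sub>m (Suc m)"
  proof (rule eq_matI)
    fix i j assume "i < dim_row (1\<^sub>m (Suc m) :: complex mat)" "j < dim_col (1\<^sub>m (Suc m) :: complex mat)"
    then have i: "i < Suc m" and j: "j < Suc m" by auto
    have e: "(cadj (ext1 m B) * ext1 m B) $$ (i,j) = (\<Sum>k<Suc m. cnj (ext1 m B $$ (k,i)) * ext1 m B $$ (k,j))"
      using mult_idx[OF cadj_carrier[OF ext1_carrier] ext1_carrier i j] i j by (simp del: sum.lessThan_Suc)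
    show "(cadj (ext1 m B) * ext1 m B) $$ (i,j) = 1\<^sub>m (Suc m) $$ (i,j)"
    proof (cases i)
      case 0
      then show ?thesis using e j by (cases j) (simp_all del: sum.lessThan_Suc add: sum.lessThan_Suc_shift)
    next
      case (Suc i')
      then have i': "i' < m" using i by simp
      show ?thesis
      proof (cases j)
        case 0
        then show ?thesis using e Suc i' by (simp del: sum.lessThan_Suc add: sum.lessThan_Suc_shift)
      next
        case (Suc j')
        then have j': "j' < m" using j by simp
        have "(cadj (ext1 m B) * ext1 m B) $$ (i,j) = (\<Sum>k<m. cnj (B $$ (k,i')) * B $$ (k,j'))"
          using e \<open>i = Suc i'\<close> Suc i' j' by (simp del: sum.lessThan_Suc add: sum.lessThan_Suc_shift)
        also have "\<dots> = (cadj B * B) $$ (i', j')"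
          using mult_idx[OF cadj_carrier[OF Bc] Bc i' j'] Bc i' j' by simp
        finally show ?thesis using BB \<open>i = Suc i'\<close> Suc i' j' by simp
      qed
    qed
  qed auto
  then show ?thesis unfolding unitary_mat_def by simp
qed

lemma unitary_mult:
  assumes U: "unitary_mat n U" and V: "unitary_mat n V"
  shows "unitary_mat n (U * V)"
proof -
  have Uc: "U \<in> carrier_mat n n" and Vc: "V \<in> carrier_mat n n" using U V by (simp_all add: unitary_carrier)
  have "cadj (U * V) * (U * V) = cadj V * (cadj U * (U * V))"
    using Uc Vc by (simp add: cadj_mult[OF Uc Vc] assoc_sq[where n=n])
  also have "\<dots> = 1\<^sub>m n" using unitary_cancel1[OF U Vc] unitary_left[OF V] by simp
  finally show ?thesis unfolding unitary_mat_def using Uc Vc by simp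
qed

definition upper_tri :: "nat \<Rightarrow> complex mat \<Rightarrow> bool" where
  "upper_tri n T \<longleftrightarrow> (\<forall>i<n. \<forall>j<i. T $$ (i,j) = 0)"

lemma schur_unitary:
  assumes "A \<in> carrier_mat n n"
  shows "\<exists>U. unitary_mat n U \<and> upper_tri n (cadj U * A * U)"
  using assms
proof (induction n arbitrary: A)
  case 0
  have "unitary_mat 0 (1\<^sub>m 0)" unfolding unitary_mat_def by simp
  then show ?case unfolding upper_tri_def by blast
next
  case (Suc m)
  have A: "A \<in> carrier_mat (Suc m) (Suc m)" by fact
  from spectrum_non_empty[OF A] obtain e where "e \<in> spectrum A" by auto
  then have ev: "eigenvalue A e" by (simp add: spectrum_def)
  from find_eigenvector[OF A ev] obtain v where evv: "eigenvector A v e" by blast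
  then have v: "v \<in> carrier_vec (Suc m)" and v0: "v \<noteq> 0\<^sub>v (Suc m)" and Av: "A *\<^sub>v v = e \<cdot>\<^sub>v v"
    unfolding eigenvector_def using A by auto
  from unitary_first_col[OF v _ v0] obtain W c where W: "unitary_mat (Suc m) W"
    and Wv: "\<forall>i<Suc m. W $$ (i,0) = c * v $ i" by auto
  have Wc: "W \<in> carrier_mat (Suc m) (Suc m)" using W by (rule unitary_carrier)
  define A' where "A' = cadj W * A * W"
  have A'c: "A' \<in> carrier_mat (Suc m) (Suc m)" unfolding A'_def using A Wc by simp
  have Avi: "(\<Sum>b<Suc m. A $$ (a,b) * W $$ (b,0)) = e * W $$ (a,0)" if a: "a < Suc m" for a
  proof -
    have "(A *\<^sub>v v) $ a = (\<Sum>b<Suc m. A $$ (a,b) * v $ b)"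
      using A v a by (simp add: scalar_prod_def atLeast0LessThan)
    then have h: "(\<Sum>b<Suc m. A $$ (a,b) * v $ b) = e * v $ a" using Av a v by (simp del: sum.lessThan_Suc)
    have "(\<Sum>b<Suc m. A $$ (a,b) * W $$ (b,0)) = c * (\<Sum>b<Suc m. A $$ (a,b) * v $ b)"
      using Wv by (simp del: sum.lessThan_Suc add: sum_distrib_left algebra_simps)
    then show ?thesis using h Wv a by simp
  qed
  have A'0: "A' $$ (k,0) = (if k = 0 then e else 0)" if k: "k < Suc m" for k
  proof -
    have "A' $$ (k,0) = (\<Sum>a<Suc m. \<Sum>b<Suc m. cadj W $$ (k,a) * A $$ (a,b) * W $$ (b,0))"
      unfolding A'_def by (rule trip_idx[OF cadj_carrier[OF Wc] A Wc k]) simp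
    also have "\<dots> = (\<Sum>a<Suc m. cadj W $$ (k,a) * (e * W $$ (a,0)))"
      by (intro sum.cong refl) (simp del: sum.lessThan_Suc add: Avi mult.assoc sum_distrib_left[symmetric])
    also have "\<dots> = e * (cadj W * W) $$ (k,0)"
      by (simp add: mult_idx[OF cadj_carrier[OF Wc] Wc k] sum_distrib_left algebra_simps)
    also have "\<dots> = (if k = 0 then e else 0)" using unitary_left[OF W] k by simp
    finally show ?thesis .
  qed
  define A3 where "A3 = mat m m (\<lambda>(i,j). A' $$ (Suc i, Suc j))"
  have A3c: "A3 \<in> carrier_mat m m" unfolding A3_def by simp
  from Suc.IH[OF A3c] obtain U3 where U3: "unitary_mat m U3" and T3: "upper_tri m (cadj U3 * A3 * U3)"
    by blast
  have U3c: "U3 \<in> carrier_mat m m" using U3 by (rule unitary_carrier)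
  define V where "V = ext1 m U3"
  have V: "unitary_mat (Suc m) V" unfolding V_def by (rule ext1_unitary[OF U3])
  have Vc: "V \<in> carrier_mat (Suc m) (Suc m)" using V by (rule unitary_carrier)
  define U where "U = W * V"
  have U: "unitary_mat (Suc m) U" unfolding U_def by (rule unitary_mult[OF W V])
  have T: "cadj U * A * U = cadj V * A' * V"
    unfolding U_def A'_def using Wc Vc A by (simp add: cadj_mult[OF Wc Vc] assoc_sq[where n="Suc m"])
  have "upper_tri (Suc m) (cadj V * A' * V)"
    unfolding upper_tri_def
  proof (intro allI impI)
    fix i j assume i: "i < Suc m" and ji: "j < i"
    have e: "(cadj V * A' * V) $$ (i,j) = (\<Sum>k<Suc m. \<Sum>l<Suc m. cnj (V $$ (k,i)) * A' $$ (k,l) * V $$ (l,j))"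
      using trip_idx[OF cadj_carrier[OF Vc] A'c Vc i, of j] ji i Vc by (simp del: sum.lessThan_Suc)
    obtain i' where i': "i = Suc i'" "i' < m" using i ji by (cases i) auto
    show "(cadj V * A' * V) $$ (i,j) = 0"
    proof (cases j)
      case 0
      then show ?thesis using e i' A'0 by (simp del: sum.lessThan_Suc add: V_def sum.lessThan_Suc_shift)
    next
      case (Suc j')
      then have j': "j' < m" "j' < i'" using ji i' by auto
      have "(cadj V * A' * V) $$ (i,j) = (\<Sum>l<m. \<Sum>k<m. cnj (U3 $$ (l,i')) * A3 $$ (l,k) * U3 $$ (k,j'))"
        using e i' j' Suc by (simp del: sum.lessThan_Suc add: V_def sum.lessThan_Suc_shift A3_def)
      also have "\<dots> = (cadj U3 * A3 * U3) $$ (i', j')"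
        using trip_idx[OF cadj_carrier[OF U3c] A3c U3c i'(2) j'(1)] i' j' U3c by simp
      also have "\<dots> = 0" using T3 j' i' unfolding upper_tri_def by simp
      finally show ?thesis .
    qed
  qed
  then show ?case using U T by auto
qed


lemma cnj_mult_self: "cnj z * z = complex_of_real ((cmod z)^2)"
  using complex_norm_square[of z] by (simp add: mult.commute)

lemma normal_upper_diag:
  assumes Tc: "T \<in> carrier_mat n n" and ut: "upper_tri n T" and nor: "cadj T * T = T * cadj T"
  shows "\<forall>k<n. \<forall>j<n. j \<noteq> k \<longrightarrow> T $$ (k,j) = 0"
proof -
  have eq: "(\<Sum>l<n. (cmod (T $$ (l,k)))^2) = (\<Sum>l<n. (cmod (T $$ (k,l)))^2)" if k: "k < n" for k
  proof -
    have "(cadj T * T) $$ (k,k) = (\<Sum>l<n. complex_of_real ((cmod (T $$ (l,k)))^2))"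
      using mult_idx[OF cadj_carrier[OF Tc] Tc k k] Tc k by (simp add: cnj_mult_self)
    moreover have "(T * cadj T) $$ (k,k) = (\<Sum>l<n. complex_of_real ((cmod (T $$ (k,l)))^2))"
      using mult_idx[OF Tc cadj_carrier[OF Tc] k k] Tc k
      by (simp del: of_real_power add: complex_norm_square)
    ultimately show ?thesis using nor by (simp del: of_real_power flip: of_real_sum)
  qed
  have "\<forall>j<n. j \<noteq> k \<longrightarrow> T $$ (k,j) = 0" if "k < n" for k
    using that
  proof (induction k rule: less_induct)
    case (less k)
    have fin: "finite {..<n}" by simp
    have kin: "k \<in> {..<n}" using less by simp
    have "(\<Sum>l<n. (cmod (T $$ (l,k)))^2) = (cmod (T $$ (k,k)))^2 + (\<Sum>l\<in>{..<n}-{k}. (cmod (T $$ (l,k)))^2)"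
      by (rule sum.remove[OF fin kin])
    also have "(\<Sum>l\<in>{..<n}-{k}. (cmod (T $$ (l,k)))^2) = 0"
    proof (rule sum.neutral, intro ballI)
      fix l assume l: "l \<in> {..<n}-{k}"
      show "(cmod (T $$ (l,k)))^2 = 0"
      proof (cases "l < k")
        case True
        then show ?thesis using less.IH[of l] less.prems l by auto
      next
        case False
        then have "k < l" using l by auto
        then show ?thesis using ut l unfolding upper_tri_def by auto
      qed
    qed
    finally have c: "(\<Sum>l<n. (cmod (T $$ (l,k)))^2) = (cmod (T $$ (k,k)))^2" by simp
    have "(\<Sum>l<n. (cmod (T $$ (k,l)))^2) = (cmod (T $$ (k,k)))^2 + (\<Sum>l\<in>{..<n}-{k}. (cmod (T $$ (k,l)))^2)"
      by (rule sum.remove[OF fin kin])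
    then have z: "(\<Sum>l\<in>{..<n}-{k}. (cmod (T $$ (k,l)))^2) = 0" using c eq[OF less.prems] by simp
    show ?case
    proof (intro allI impI)
      fix j assume j: "j < n" "j \<noteq> k"
      have "(cmod (T $$ (k,j)))^2 = 0"
        using z j by (subst (asm) sum_nonneg_eq_0_iff) auto
      then show "T $$ (k,j) = 0" by simp
    qed
  qed
  then show ?thesis by blast
qed

lemma herm_idx:
  assumes "hermitian_mat n A" "i < n" "j < n"
  shows "cnj (A $$ (j,i)) = A $$ (i,j)"
proof -
  have Ac: "A \<in> carrier_mat n n" and h: "cadj A = A" using assms(1) unfolding hermitian_mat_def by auto
  have "cadj A $$ (i,j) = cnj (A $$ (j,i))" using Ac assms by simp
  then show ?thesis using h by simp
qed

lemma simult_diag: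
  assumes hr: "hermitian_mat n \<rho>" and hs: "hermitian_mat n \<sigma>" and com: "\<rho> * \<sigma> = \<sigma> * \<rho>"
  shows "\<exists>U p q. unitary_mat n U \<and> \<rho> = U * real_diag n p * cadj U \<and> \<sigma> = U * real_diag n q * cadj U"
proof -
  have rc: "\<rho> \<in> carrier_mat n n" and sc: "\<sigma> \<in> carrier_mat n n"
    using hr hs unfolding hermitian_mat_def by auto
  define N where "N = mat n n (\<lambda>(i,j). \<rho> $$ (i,j) + \<i> * \<sigma> $$ (i,j))"
  have Nc: "N \<in> carrier_mat n n" unfolding N_def by simp
  have normal: "cadj N * N = N * cadj N"
  proof (rule eq_matI)
    fix i j assume "i < dim_row (N * cadj N)" "j < dim_col (N * cadj N)"
    then have i: "i < n" and j: "j < n" using Nc by auto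
    have rs: "(\<Sum>k<n. \<rho> $$ (i,k) * \<sigma> $$ (k,j)) = (\<Sum>k<n. \<sigma> $$ (i,k) * \<rho> $$ (k,j))"
      using arg_cong[OF com, of "\<lambda>X. X $$ (i,j)"] mult_idx[OF rc sc i j] mult_idx[OF sc rc i j] by simp
    have "(cadj N * N) $$ (i,j) = (\<Sum>k<n. (\<rho> $$ (i,k) - \<i> * \<sigma> $$ (i,k)) * (\<rho> $$ (k,j) + \<i> * \<sigma> $$ (k,j)))"
      using mult_idx[OF cadj_carrier[OF Nc] Nc i j] Nc i j
      by (auto intro!: sum.cong simp: N_def herm_idx[OF hr] herm_idx[OF hs])
    also have "\<dots> = (\<Sum>k<n. \<rho> $$ (i,k) * \<rho> $$ (k,j) + \<sigma> $$ (i,k) * \<sigma> $$ (k,j))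
        + \<i> * ((\<Sum>k<n. \<rho> $$ (i,k) * \<sigma> $$ (k,j)) - (\<Sum>k<n. \<sigma> $$ (i,k) * \<rho> $$ (k,j)))"
      by (simp add: algebra_simps sum.distrib sum_subtractf sum_distrib_left)
    also have "\<dots> = (\<Sum>k<n. \<rho> $$ (i,k) * \<rho> $$ (k,j) + \<sigma> $$ (i,k) * \<sigma> $$ (k,j))
        + \<i> * ((\<Sum>k<n. \<sigma> $$ (i,k) * \<rho> $$ (k,j)) - (\<Sum>k<n. \<rho> $$ (i,k) * \<sigma> $$ (k,j)))"
      using rs by simp
    also have "\<dots> = (\<Sum>k<n. (\<rho> $$ (i,k) + \<i> * \<sigma> $$ (i,k)) * (\<rho> $$ (k,j) - \<i> * \<sigma> $$ (k,j)))"
      by (simp add: algebra_simps sum.distrib sum_subtractf sum_distrib_left)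
    also have "\<dots> = (N * cadj N) $$ (i,j)"
      using mult_idx[OF Nc cadj_carrier[OF Nc] i j] Nc i j
      by (auto intro!: sum.cong simp: N_def herm_idx[OF hr] herm_idx[OF hs])
    finally show "(cadj N * N) $$ (i,j) = (N * cadj N) $$ (i,j)" .
  qed (use Nc in auto)
  from schur_unitary[OF Nc] obtain U where U: "unitary_mat n U" and ut: "upper_tri n (cadj U * N * U)"
    by blast
  have Uc: "U \<in> carrier_mat n n" using U by (rule unitary_carrier)
  define T where "T = cadj U * N * U"
  have Tc: "T \<in> carrier_mat n n" unfolding T_def using Uc Nc by simp
  have cT: "cadj T = cadj U * cadj N * U"
    unfolding T_def using Uc Nc by (simp add: cadj_mult[of _ n n _ n] assoc_sq[where n=n])
  have TT: "cadj T * T = (cadj U * cadj N * U) * (cadj U * N * U)" "T * cadj T = (cadj U * N * U) * (cadj U * cadj N * U)"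
    using cT T_def by simp_all
  have "cadj T * T = cadj U * (cadj N * N) * U"
    unfolding TT using Uc Nc
    by (simp add: assoc_sq[where n=n] unitary_cancel2[OF U, of _ n])
  also have "\<dots> = cadj U * (N * cadj N) * U" using normal by simp
  also have "\<dots> = T * cadj T"
    unfolding TT using Uc Nc
    by (simp add: assoc_sq[where n=n] unitary_cancel2[OF U, of _ n])
  finally have Tn: "cadj T * T = T * cadj T" .
  have Tdiag: "\<forall>k<n. \<forall>j<n. j \<noteq> k \<longrightarrow> T $$ (k,j) = 0"
    by (rule normal_upper_diag[OF Tc _ Tn]) (use ut T_def in simp)
  define R where "R = cadj U * \<rho> * U"
  define S where "S = cadj U * \<sigma> * U"
  have Rc: "R \<in> carrier_mat n n" and Sc: "S \<in> carrier_mat n n" unfolding R_def S_def using Uc rc sc by auto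
  have TRS: "T $$ (i,j) = R $$ (i,j) + \<i> * S $$ (i,j)" if i: "i < n" and j: "j < n" for i j
  proof -
    have "T $$ (i,j) = (\<Sum>k<n. \<Sum>l<n. cadj U $$ (i,k) * N $$ (k,l) * U $$ (l,j))"
      unfolding T_def by (rule trip_idx[OF cadj_carrier[OF Uc] Nc Uc i j])
    also have "\<dots> = (\<Sum>k<n. \<Sum>l<n. cadj U $$ (i,k) * \<rho> $$ (k,l) * U $$ (l,j))
                   + \<i> * (\<Sum>k<n. \<Sum>l<n. cadj U $$ (i,k) * \<sigma> $$ (k,l) * U $$ (l,j))"
      by (simp add: N_def algebra_simps sum.distrib sum_distrib_left)
    also have "\<dots> = R $$ (i,j) + \<i> * S $$ (i,j)"
      unfolding R_def S_def
      by (simp add: trip_idx[OF cadj_carrier[OF Uc] rc Uc i j] trip_idx[OF cadj_carrier[OF Uc] sc Uc i j])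
    finally show ?thesis .
  qed
  have hR: "hermitian_mat n R"
    unfolding hermitian_mat_def R_def using Uc rc hr
    by (simp add: cadj_mult[of _ n n _ n] assoc_sq[where n=n] hermitian_mat_def)
  have hS: "hermitian_mat n S"
    unfolding hermitian_mat_def S_def using Uc sc hs
    by (simp add: cadj_mult[of _ n n _ n] assoc_sq[where n=n] hermitian_mat_def)
  have offd: "R $$ (i,j) = 0 \<and> S $$ (i,j) = 0" if i: "i < n" and j: "j < n" and ij: "i \<noteq> j" for i j
  proof -
    have 1: "R $$ (i,j) + \<i> * S $$ (i,j) = 0" using TRS[OF i j] Tdiag i j ij by auto
    have "R $$ (j,i) + \<i> * S $$ (j,i) = 0" using TRS[OF j i] Tdiag i j ij by auto
    then have "cnj (R $$ (i,j)) + \<i> * cnj (S $$ (i,j)) = 0"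
      using herm_idx[OF hR j i] herm_idx[OF hS j i] by simp
    then have "cnj (cnj (R $$ (i,j)) + \<i> * cnj (S $$ (i,j))) = 0" by simp
    then have 2: "R $$ (i,j) - \<i> * S $$ (i,j) = 0" by simp
    have "(R $$ (i,j) + \<i> * S $$ (i,j)) + (R $$ (i,j) - \<i> * S $$ (i,j)) = 0" using 1 2 by simp
    then have "2 * R $$ (i,j) = 0" by (simp add: algebra_simps)
    then have r0: "R $$ (i,j) = 0" by simp
    then have "S $$ (i,j) = 0" using 1 by simp
    with r0 show ?thesis by simp
  qed
  have realdiag: "A = real_diag n (\<lambda>i. Re (A $$ (i,i)))" if hA: "hermitian_mat n A" and
    od: "\<And>i j. i < n \<Longrightarrow> j < n \<Longrightarrow> i \<noteq> j \<Longrightarrow> A $$ (i,j) = 0" for A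
  proof (rule eq_matI)
    fix i j assume "i < dim_row (real_diag n (\<lambda>i. Re (A $$ (i,i))))" "j < dim_col (real_diag n (\<lambda>i. Re (A $$ (i,i))))"
    then have i: "i < n" and j: "j < n" by auto
    show "A $$ (i,j) = real_diag n (\<lambda>i. Re (A $$ (i,i))) $$ (i,j)"
    proof (cases "i = j")
      case True
      have "cnj (A $$ (i,i)) = A $$ (i,i)" using herm_idx[OF hA i i] .
      then have "Im (A $$ (i,i)) = 0" by (metis Reals_cnj_iff complex_is_Real_iff)
      then show ?thesis using True i by (simp add: complex_eq_iff)
    qed (use od i j in auto)
  qed (use hA in \<open>auto simp: hermitian_mat_def\<close>)
  have Rd: "R = real_diag n (\<lambda>i. Re (R $$ (i,i)))" by (rule realdiag[OF hR]) (use offd in auto)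
  have Sd: "S = real_diag n (\<lambda>i. Re (S $$ (i,i)))" by (rule realdiag[OF hS]) (use offd in auto)
  have bck: "U * (cadj U * X * U) * cadj U = X" if "X \<in> carrier_mat n n" for X
    using that Uc by (simp add: assoc_sq[where n=n] unitary_cancel2[OF U, of _ n] unitary_cancel4[OF U, of _ n]
        unitary_right[OF U])
  have "\<rho> = U * R * cadj U" unfolding R_def using bck[OF rc] by simp
  moreover have "\<sigma> = U * S * cadj U" unfolding S_def using bck[OF sc] by simp
  ultimately show ?thesis using U Rd Sd by metis
qed


lemma conj_diag_idx:
  assumes U: "U \<in> carrier_mat n n" and a: "a < n" and b: "b < n"
  shows "(U * real_diag n f * cadj U) $$ (a,b) = (\<Sum>j<n. U $$ (a,j) * complex_of_real (f j) * cnj (U $$ (b,j)))"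
proof -
  have "(U * real_diag n f * cadj U) $$ (a,b) = (\<Sum>k<n. \<Sum>l<n. U $$ (a,k) * real_diag n f $$ (k,l) * cadj U $$ (l,b))"
    by (rule trip_idx[OF U real_diag_carrier cadj_carrier[OF U] a b])
  also have "\<dots> = (\<Sum>k<n. \<Sum>l\<in>{k}. U $$ (a,k) * real_diag n f $$ (k,l) * cadj U $$ (l,b))"
    by (intro sum.cong refl sum.mono_neutral_right) auto
  finally show ?thesis using U a b by simp
qed

lemma quad_form:
  assumes A: "A \<in> carrier_mat n n" and v: "v \<in> carrier_vec n"
  shows "map_vec cnj v \<bullet> (A *\<^sub>v v) = (\<Sum>a<n. \<Sum>b<n. cnj (v $ a) * A $$ (a,b) * v $ b)"
  using A v by (simp add: scalar_prod_def atLeast0LessThan sum_distrib_left mult.assoc)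

lemma diag_nonneg_of_psd:
  assumes U: "unitary_mat n U" and psd: "psd_mat n A" and A: "A = U * real_diag n p * cadj U" and i: "i < n"
  shows "0 \<le> p i"
proof -
  have Uc: "U \<in> carrier_mat n n" using U by (rule unitary_carrier)
  have Ac: "A \<in> carrier_mat n n" using A Uc by simp
  define v where "v = col U i"
  have dU: "dim_row U = n" "dim_col U = n" using Uc by auto
  have v: "v \<in> carrier_vec n" unfolding v_def using col_dim[of U i] dU by simp
  have "map_vec cnj v \<bullet> (A *\<^sub>v v) = (\<Sum>a<n. \<Sum>b<n. cnj (v $ a) * A $$ (a,b) * v $ b)"
    by (rule quad_form[OF Ac v])
  also have "\<dots> = (\<Sum>a<n. \<Sum>b<n. cadj U $$ (i,a) * A $$ (a,b) * U $$ (b,i))"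
    by (intro sum.cong refl) (simp add: v_def dU i)
  also have "\<dots> = (cadj U * A * U) $$ (i,i)"
    by (rule trip_idx[OF cadj_carrier[OF Uc] Ac Uc i i, symmetric])
  also have "cadj U * A * U = real_diag n p"
    using unconj_by[OF U real_diag_carrier[of n p]] A unfolding conj_by_def by simp
  finally have "map_vec cnj v \<bullet> (A *\<^sub>v v) = complex_of_real (p i)" using i by simp
  moreover have "0 \<le> Re (map_vec cnj v \<bullet> (A *\<^sub>v v))" using psd v unfolding psd_mat_def by blast
  ultimately show ?thesis by simp
qed

lemma trace_of_diag:
  assumes U: "unitary_mat n U" and A: "A = U * real_diag n p * cadj U"
  shows "mtrace A = complex_of_real (\<Sum>i<n. p i)"
  using mtrace_conj_by[OF U real_diag_carrier[of n p]] A mtrace_real_diag unfolding conj_by_def by simp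

lemma diag_pos_of_invertible:
  assumes U: "unitary_mat n U" and inv: "invertible_mat A" and A: "A = U * real_diag n q * cadj U" and i: "i < n"
  shows "q i \<noteq> 0"
proof
  assume q0: "q i = 0"
  have Uc: "U \<in> carrier_mat n n" using U by (rule unitary_carrier)
  have Ac: "A \<in> carrier_mat n n" using A Uc by simp
  from inv obtain B where AB: "A * B = 1\<^sub>m (dim_row A)" and BA: "B * A = 1\<^sub>m (dim_row B)"
    unfolding invertible_mat_def inverts_mat_def by blast
  have dB: "dim_row B = n" using BA Ac
    by (metis carrier_matD(2) index_mult_mat(3) index_one_mat(3))
  have dB2: "dim_col B = n" using AB Ac by (metis carrier_matD(1) index_mult_mat(3) index_one_mat(3))
  have Bc: "B \<in> carrier_mat n n" using dB dB2 by auto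
  have AU: "A * U = U * real_diag n q"
    using A Uc by (simp add: assoc_sq[where n=n] unitary_cancel3[OF U, of _ n] unitary_left[OF U])
  have "U = B * A * U" using BA dB Uc by simp
  also have "\<dots> = B * U * real_diag n q" using AU Bc Ac Uc by (simp add: assoc_sq[where n=n])
  finally have eq: "U = B * U * real_diag n q" .
  have "U $$ (k,i) = 0" if k: "k < n" for k
  proof -
    have "U $$ (k,i) = (B * U * real_diag n q) $$ (k,i)" using eq by simp
    also have "\<dots> = (B * U) $$ (k,i) * complex_of_real (q i)"
      by (rule diag_right_idx) (use Bc Uc k i in auto)
    finally show ?thesis using q0 by simp
  qed
  then have "(cadj U * U) $$ (i,i) = 0"
    using mult_idx[OF cadj_carrier[OF Uc] Uc i i] Uc i by simp
  then show False using unitary_left[OF U] i by simp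
qed

lemma density_diag:
  assumes W: "unitary_mat n W" and r: "\<And>i. i < n \<Longrightarrow> 0 \<le> r i" and s: "(\<Sum>i<n. r i) = 1"
  shows "density_mat n (W * real_diag n r * cadj W)"
proof -
  have Wc: "W \<in> carrier_mat n n" using W by (rule unitary_carrier)
  let ?A = "W * real_diag n r * cadj W"
  have Ac: "?A \<in> carrier_mat n n" using Wc by simp
  have herm: "hermitian_mat n ?A"
    using conj_by_cadj[OF Wc real_diag_carrier[of n r]] Ac unfolding conj_by_def hermitian_mat_def by simp
  have "0 \<le> Re (map_vec cnj v \<bullet> (?A *\<^sub>v v))" if v: "v \<in> carrier_vec n" for v
  proof -
    define y where "y = (\<lambda>j. \<Sum>b<n. cnj (W $$ (b,j)) * v $ b)"
    have "map_vec cnj v \<bullet> (?A *\<^sub>v v) = (\<Sum>a<n. \<Sum>b<n. cnj (v $ a) * ?A $$ (a,b) * v $ b)"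
      by (rule quad_form[OF Ac v])
    also have "\<dots> = (\<Sum>a<n. \<Sum>b<n. \<Sum>j<n. cnj (v $ a) * W $$ (a,j) * complex_of_real (r j) * cnj (W $$ (b,j)) * v $ b)"
      by (intro sum.cong refl) (simp add: conj_diag_idx[OF Wc] sum_distrib_left sum_distrib_right mult.assoc)
    also have "\<dots> = (\<Sum>j<n. complex_of_real (r j) * (cnj (y j) * y j))"
    proof -
      have "(\<Sum>a<n. \<Sum>b<n. \<Sum>j<n. cnj (v $ a) * W $$ (a,j) * complex_of_real (r j) * cnj (W $$ (b,j)) * v $ b)
          = (\<Sum>j<n. \<Sum>a<n. \<Sum>b<n. cnj (v $ a) * W $$ (a,j) * complex_of_real (r j) * cnj (W $$ (b,j)) * v $ b)"
        (is "?L = _")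
      proof -
        have "?L = (\<Sum>a<n. \<Sum>j<n. \<Sum>b<n. cnj (v $ a) * W $$ (a,j) * complex_of_real (r j) * cnj (W $$ (b,j)) * v $ b)"
          by (rule sum.cong[OF refl], rule sum.swap)
        also have "\<dots> = (\<Sum>j<n. \<Sum>a<n. \<Sum>b<n. cnj (v $ a) * W $$ (a,j) * complex_of_real (r j) * cnj (W $$ (b,j)) * v $ b)"
          by (rule sum.swap)
        finally show ?thesis .
      qed
      also have "\<dots> = (\<Sum>j<n. complex_of_real (r j) * (cnj (y j) * y j))"
      proof (rule sum.cong[OF refl])
        fix j assume "j \<in> {..<n}"
        have cy: "cnj (y j) = (\<Sum>a<n. cnj (v $ a) * W $$ (a,j))"
          unfolding y_def by (simp add: mult.commute)
        have yj: "y j = (\<Sum>b<n. cnj (W $$ (b,j)) * v $ b)" by (simp add: y_def)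
        have "complex_of_real (r j) * (cnj (y j) * y j)
            = complex_of_real (r j) * ((\<Sum>a<n. cnj (v $ a) * W $$ (a,j)) * (\<Sum>b<n. cnj (W $$ (b,j)) * v $ b))"
          by (subst cy, subst yj, rule refl)
        also have "\<dots> = (\<Sum>a<n. \<Sum>b<n. complex_of_real (r j) * ((cnj (v $ a) * W $$ (a,j)) * (cnj (W $$ (b,j)) * v $ b)))"
          by (subst sum_product) (simp only: sum_distrib_left)
        also have "\<dots> = (\<Sum>a<n. \<Sum>b<n. cnj (v $ a) * W $$ (a,j) * complex_of_real (r j) * cnj (W $$ (b,j)) * v $ b)"
          by (intro sum.cong refl) (simp only: ac_simps)
        finally show "(\<Sum>a<n. \<Sum>b<n. cnj (v $ a) * W $$ (a,j) * complex_of_real (r j) * cnj (W $$ (b,j)) * v $ b)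
            = complex_of_real (r j) * (cnj (y j) * y j)" by simp
      qed
      finally show ?thesis .
    qed
    also have "\<dots> = complex_of_real (\<Sum>j<n. r j * (cmod (y j))^2)"
      by (simp add: cnj_mult_self)
    finally show ?thesis using r by (auto intro!: sum_nonneg)
  qed
  then have "psd_mat n ?A" unfolding psd_mat_def using herm by blast
  moreover have "mtrace ?A = 1" using trace_of_diag[OF W refl, of r] s by (simp del: of_real_sum)
  ultimately show ?thesis unfolding density_mat_def by simp
qed


lemma entropy_formula:
  assumes U: "unitary_mat n U" and r: "\<rho> = U * real_diag n p * cadj U" and s: "\<sigma> = U * real_diag n q * cadj U"
  shows "rel_entropy \<rho> \<sigma> = (\<Sum>i<n. p i * (log 2 (p i) - log 2 (q i)))"
    and "rel_variance \<rho> \<sigma> = (\<Sum>i<n. p i * (log 2 (p i) - log 2 (q i))^2) - (\<Sum>i<n. p i * (log 2 (p i) - log 2 (q i)))^2"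
proof -
  have Uc: "U \<in> carrier_mat n n" using U by (rule unitary_carrier)
  define x where "x = (\<lambda>i. log 2 (p i) - log 2 (q i))"
  have lr: "mlog \<rho> = conj_by U (real_diag n (\<lambda>i. log 2 (p i)))"
    unfolding mlog_def conj_by_def by (rule mat_fun_eval[OF U r])
  have ls: "mlog \<sigma> = conj_by U (real_diag n (\<lambda>i. log 2 (q i)))"
    unfolding mlog_def conj_by_def by (rule mat_fun_eval[OF U s])
  have L: "mlog \<rho> - mlog \<sigma> = conj_by U (real_diag n x)"
    unfolding lr ls x_def using conj_by_minus[OF Uc real_diag_carrier real_diag_carrier] real_diag_minus by simp
  have r': "\<rho> = conj_by U (real_diag n p)" using r unfolding conj_by_def .
  have M1: "\<rho> * (mlog \<rho> - mlog \<sigma>) = conj_by U (real_diag n (\<lambda>i. p i * x i))"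
    by (subst L, simp only: r', simp add: conj_by_mult[OF U] real_diag_mult)
  have LL: "(mlog \<rho> - mlog \<sigma>) * (mlog \<rho> - mlog \<sigma>) = conj_by U (real_diag n (\<lambda>i. x i * x i))"
    unfolding L by (simp add: conj_by_mult[OF U] real_diag_mult)
  have M2: "\<rho> * ((mlog \<rho> - mlog \<sigma>) * (mlog \<rho> - mlog \<sigma>)) = conj_by U (real_diag n (\<lambda>i. p i * (x i * x i)))"
    by (subst LL, simp only: r', simp add: conj_by_mult[OF U] real_diag_mult)
  have E: "rel_entropy \<rho> \<sigma> = (\<Sum>i<n. p i * x i)"
    unfolding rel_entropy_def M1 mtrace_conj_by[OF U real_diag_carrier] mtrace_real_diag by simp
  then show "rel_entropy \<rho> \<sigma> = (\<Sum>i<n. p i * (log 2 (p i) - log 2 (q i)))" unfolding x_def .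
  have "Re (mtrace (\<rho> * ((mlog \<rho> - mlog \<sigma>) * (mlog \<rho> - mlog \<sigma>)))) = (\<Sum>i<n. p i * (x i)^2)"
    unfolding M2 mtrace_conj_by[OF U real_diag_carrier] mtrace_real_diag by (simp add: power2_eq_square)
  then show "rel_variance \<rho> \<sigma> = (\<Sum>i<n. p i * (log 2 (p i) - log 2 (q i))^2) - (\<Sum>i<n. p i * (log 2 (p i) - log 2 (q i)))^2"
    unfolding rel_variance_def E unfolding x_def by simp
qed

lemma trace_dist_formula:
  assumes W: "unitary_mat n W" and A: "A = W * real_diag n a * cadj W" and B: "B = W * real_diag n b * cadj W"
  shows "trace_dist A B = (\<Sum>i<n. \<bar>a i - b i\<bar>) / 2"
proof -
  have Wc: "W \<in> carrier_mat n n" using W by (rule unitary_carrier)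
  define c where "c = (\<lambda>i. a i - b i)"
  have D: "A - B = conj_by W (real_diag n c)"
    unfolding A B c_def using conj_by_minus[OF Wc real_diag_carrier real_diag_carrier, of a b] real_diag_minus
    unfolding conj_by_def by simp
  have cD: "cadj (A - B) = conj_by W (real_diag n c)"
    unfolding D using conj_by_cadj[OF Wc real_diag_carrier] by simp
  have P0: "cadj (A - B) * (A - B) = conj_by W (real_diag n (\<lambda>i. c i * c i))"
    by (subst cD, subst D, simp add: conj_by_mult[OF W] real_diag_mult)
  have P: "cadj (A - B) * (A - B) = W * real_diag n (\<lambda>i. c i * c i) * cadj W"
    using P0 unfolding conj_by_def .
  have S: "mat_fun sqrt (cadj (A - B) * (A - B)) = conj_by W (real_diag n (\<lambda>i. \<bar>c i\<bar>))"
    unfolding conj_by_def using mat_fun_eval[OF W P, of sqrt] by (simp add: real_sqrt_abs2)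
  have "trace_norm (A - B) = (\<Sum>i<n. \<bar>c i\<bar>)"
    unfolding trace_norm_def S mtrace_conj_by[OF W real_diag_carrier] mtrace_real_diag by simp
  then show ?thesis unfolding trace_dist_def c_def by simp
qed


lemma adj_vec:
  assumes M: "M \<in> carrier_mat m n" and v: "v \<in> carrier_vec n" and z: "z \<in> carrier_vec m"
  shows "map_vec cnj v \<bullet> (cadj M *\<^sub>v z) = map_vec cnj (M *\<^sub>v v) \<bullet> z"
proof -
  have "map_vec cnj v \<bullet> (cadj M *\<^sub>v z) = (\<Sum>I<n. cnj (v $ I) * (\<Sum>P<m. cnj (M $$ (P,I)) * z $ P))"
    using M v z by (simp add: scalar_prod_def atLeast0LessThan)
  also have "\<dots> = (\<Sum>I<n. \<Sum>P<m. cnj (v $ I) * cnj (M $$ (P,I)) * z $ P)"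
    by (simp add: sum_distrib_left mult.assoc)
  also have "\<dots> = (\<Sum>P<m. \<Sum>I<n. cnj (v $ I) * cnj (M $$ (P,I)) * z $ P)"
    by (rule sum.swap)
  also have "\<dots> = (\<Sum>P<m. cnj (\<Sum>I<n. M $$ (P,I) * v $ I) * z $ P)"
    by (simp add: sum_distrib_right sum_distrib_left ac_simps)
  also have "\<dots> = map_vec cnj (M *\<^sub>v v) \<bullet> z"
    using M v z by (simp add: scalar_prod_def atLeast0LessThan)
  finally show ?thesis .
qed

lemma congr_psd_quad:
  assumes X: "psd_mat m X" and M: "M \<in> carrier_mat m n" and v: "v \<in> carrier_vec n"
  shows "0 \<le> Re (map_vec cnj v \<bullet> ((cadj M * X * M) *\<^sub>v v))"
proof -
  have Xc: "X \<in> carrier_mat m m" using X unfolding psd_mat_def hermitian_mat_def by auto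
  have w: "M *\<^sub>v v \<in> carrier_vec m" using M v by simp
  have "(cadj M * X * M) *\<^sub>v v = (cadj M * X) *\<^sub>v (M *\<^sub>v v)"
    by (rule assoc_mult_mat_vec) (use M Xc v in auto)
  also have "\<dots> = cadj M *\<^sub>v (X *\<^sub>v (M *\<^sub>v v))"
    by (rule assoc_mult_mat_vec) (use M Xc v in auto)
  finally have "(cadj M * X * M) *\<^sub>v v = cadj M *\<^sub>v (X *\<^sub>v (M *\<^sub>v v))" .
  then have "map_vec cnj v \<bullet> ((cadj M * X * M) *\<^sub>v v) = map_vec cnj (M *\<^sub>v v) \<bullet> (X *\<^sub>v (M *\<^sub>v v))"
    using adj_vec[OF M v, of "X *\<^sub>v (M *\<^sub>v v)"] Xc w by simp
  then show ?thesis using X w unfolding psd_mat_def by simp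
qed

lemma sum_block:
  fixes f :: "nat \<Rightarrow> 'b::comm_monoid_add"
  assumes a0: "a0 < k" and z: "\<And>P. P < k * d \<Longrightarrow> P div d \<noteq> a0 \<Longrightarrow> f P = 0"
  shows "(\<Sum>P<k*d. f P) = (\<Sum>r<d. f (a0 * d + r))"
proof -
  have sub: "{a0*d..<a0*d+d} \<subseteq> {..<k*d}"
  proof
    fix P assume "P \<in> {a0*d..<a0*d+d}"
    then have "P < a0 * d + d" by simp
    also have "a0 * d + d = Suc a0 * d" by simp
    also have "\<dots> \<le> k * d" using a0 by (intro mult_right_mono) auto
    finally show "P \<in> {..<k*d}" by simp
  qed
  have zero: "\<forall>P\<in>{..<k * d} - {a0 * d..<a0 * d + d}. f P = 0"
  proof
    fix P assume P: "P \<in> {..<k * d} - {a0 * d..<a0 * d + d}"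
    have "P div d \<noteq> a0"
    proof
      assume h: "P div d = a0"
      have "a0 * d \<le> P" using h div_times_less_eq_dividend[of P d] by (simp add: mult.commute)
      moreover have "P < a0 * d + d"
      proof -
        have "P = a0 * d + P mod d" using h div_mult_mod_eq[of P d] by simp
        moreover have "P mod d < d" using P by (cases "d = 0") auto
        ultimately show ?thesis using h by linarith
      qed
      ultimately show False using P by auto
    qed
    then show "f P = 0" using z P by auto
  qed
  have "(\<Sum>P<k*d. f P) = (\<Sum>P\<in>{a0*d..<a0*d+d}. f P)"
    by (rule sum.mono_neutral_right) (use sub zero in auto)
  also have "\<dots> = (\<Sum>r<d. f (a0 * d + r))"
  proof -
    have "(\<Sum>P\<in>{0 + a0*d..<d + a0*d}. f P) = (\<Sum>r\<in>{0..<d}. f (r + a0*d))"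
      by (rule sum.shift_bounds_nat_ivl)
    then show ?thesis by (simp add: atLeast0LessThan add.commute)
  qed
  finally show ?thesis .
qed

lemma block_bound:
  fixes a k s d :: nat
  assumes "a < k" "s < d" shows "a * d + s < k * d"
proof -
  have "a * d + s < a * d + d" using assms by simp
  also have "\<dots> = Suc a * d" by simp
  also have "\<dots> \<le> k * d" using assms by (intro mult_right_mono) auto
  finally show ?thesis .
qed

lemma div_bound: "(I::nat) < k * d' \<Longrightarrow> I div d' < k"
  by (simp add: less_mult_imp_div_less)

lemma mod_bound: "(I::nat) < k * d' \<Longrightarrow> I mod d' < d'"
  by (cases "d' = 0") auto

lemma block_div[simp]: "(r::nat) < d \<Longrightarrow> (a * d + r) div d = a"
  by simp

lemma block_mod[simp]: "(r::nat) < d \<Longrightarrow> (a * d + r) mod d = r"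
  by simp

definition kmat :: "nat \<Rightarrow> nat \<Rightarrow> nat \<Rightarrow> (nat \<Rightarrow> nat \<Rightarrow> complex) \<Rightarrow> complex mat" where
  "kmat d d' k K = mat (k*d) (k*d') (\<lambda>(P,I). if P div d = I div d' then K (P mod d) (I mod d') else 0)"

lemma kmat_carrier[simp]: "kmat d d' k K \<in> carrier_mat (k*d) (k*d')"
  by (simp add: kmat_def)

lemma kmat_congr_idx:
  assumes Xc: "X \<in> carrier_mat (k*d) (k*d)" and I: "I < k*d'" and J: "J < k*d'"
  shows "(cadj (kmat d d' k K) * X * kmat d d' k K) $$ (I,J)
     = (\<Sum>r<d. \<Sum>s<d. cnj (K r (I mod d')) * X $$ ((I div d') * d + r, (J div d') * d + s) * K s (J mod d'))"
proof -
  let ?M = "kmat d d' k K"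
  have Mc: "?M \<in> carrier_mat (k*d) (k*d')" by simp
  have aI: "I div d' < k" and aJ: "J div d' < k" using div_bound I J by auto
  have "(cadj ?M * X * ?M) $$ (I,J) = (\<Sum>P<k*d. \<Sum>L<k*d. cadj ?M $$ (I,P) * X $$ (P,L) * ?M $$ (L,J))"
    by (rule trip_idx[OF cadj_carrier[OF Mc] Xc Mc I J])
  also have "\<dots> = (\<Sum>P<k*d. \<Sum>L<k*d. cnj (?M $$ (P,I)) * X $$ (P,L) * ?M $$ (L,J))"
    using I by (intro sum.cong refl) (simp add: kmat_def)
  also have "\<dots> = (\<Sum>r<d. \<Sum>L<k*d. cnj (?M $$ ((I div d') * d + r,I)) * X $$ ((I div d') * d + r,L) * ?M $$ (L,J))"
    by (rule sum_block[OF aI]) (use I in \<open>simp add: kmat_def\<close>)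
  also have "\<dots> = (\<Sum>r<d. \<Sum>s<d. cnj (?M $$ ((I div d') * d + r,I)) * X $$ ((I div d') * d + r,(J div d') * d + s) * ?M $$ ((J div d') * d + s,J))"
    by (intro sum.cong refl sum_block[OF aJ]) (use J in \<open>simp add: kmat_def\<close>)
  also have "\<dots> = (\<Sum>r<d. \<Sum>s<d. cnj (K r (I mod d')) * X $$ ((I div d') * d + r, (J div d') * d + s) * K s (J mod d'))"
    by (intro sum.cong refl) (use I J in \<open>simp add: kmat_def block_bound[OF aI] block_bound[OF aJ] mod_bound\<close>)
  finally show ?thesis .
qed

lemma kraus_cp:
  fixes E :: "complex mat \<Rightarrow> complex mat" and t :: "'a \<Rightarrow> real" and K :: "'a \<Rightarrow> nat \<Rightarrow> nat \<Rightarrow> complex"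
  assumes F: "finite F" and t: "\<forall>a\<in>F. 0 \<le> t a"
    and Eform: "\<forall>X \<in> carrier_mat d d. \<forall>b<d'. \<forall>b'<d'. E X $$ (b,b') =
        (\<Sum>a\<in>F. complex_of_real (t a) * (\<Sum>r<d. \<Sum>s<d. cnj (K a r b) * X $$ (r,s) * K a s b'))"
    and X: "psd_mat (k * d) X"
  shows "psd_mat (k * d') (ampliate d d' k E X)"
proof -
  let ?Y = "ampliate d d' k E X"
  let ?M = "\<lambda>a. kmat d d' k (K a)"
  have Xc: "X \<in> carrier_mat (k*d) (k*d)" using X unfolding psd_mat_def hermitian_mat_def by auto
  have Yc: "?Y \<in> carrier_mat (k*d') (k*d')" by (simp add: ampliate_def)
  have Yrep: "?Y $$ (I,J) = (\<Sum>a\<in>F. complex_of_real (t a) * (cadj (?M a) * X * ?M a) $$ (I,J))"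
    if I: "I < k*d'" and J: "J < k*d'" for I J
  proof -
    have aI: "I div d' < k" and aJ: "J div d' < k" using div_bound I J by auto
    have bI: "I mod d' < d'" and bJ: "J mod d' < d'" using mod_bound I J by auto
    let ?B = "mat d d (\<lambda>(r,s). X $$ ((I div d') * d + r, (J div d') * d + s))"
    have "?Y $$ (I,J) = E ?B $$ (I mod d', J mod d')"
      unfolding ampliate_def using I J by simp
    also have "\<dots> = (\<Sum>a\<in>F. complex_of_real (t a) * (\<Sum>r<d. \<Sum>s<d. cnj (K a r (I mod d')) * ?B $$ (r,s) * K a s (J mod d')))"
      using Eform bI bJ by simp
    also have "\<dots> = (\<Sum>a\<in>F. complex_of_real (t a) * (cadj (?M a) * X * ?M a) $$ (I,J))"
      by (intro sum.cong refl) (simp add: kmat_congr_idx[OF Xc I J])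
    finally show ?thesis .
  qed
  have hM: "hermitian_mat (k*d') (cadj (?M a) * X * ?M a)" for a
  proof -
    have cX: "cadj X = X" using X unfolding psd_mat_def hermitian_mat_def by auto
    have Mc: "?M a \<in> carrier_mat (k*d) (k*d')" by simp
    have MX: "cadj (?M a) * X \<in> carrier_mat (k*d') (k*d)" using mult_carrier_mat[OF cadj_carrier[OF Mc] Xc] .
    have "cadj (cadj (?M a) * X * ?M a) = cadj (?M a) * cadj (cadj (?M a) * X)"
      by (rule cadj_mult[OF MX Mc])
    also have "cadj (cadj (?M a) * X) = X * ?M a"
      using cadj_mult[OF cadj_carrier[OF Mc] Xc] cX by simp
    also have "cadj (?M a) * (X * ?M a) = cadj (?M a) * X * ?M a"
      using assoc_mult_mat[OF cadj_carrier[OF Mc] Xc Mc] by simp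
    finally show ?thesis unfolding hermitian_mat_def using MX Mc by simp
  qed
  have MXMc: "cadj (?M a) * X * ?M a \<in> carrier_mat (k*d') (k*d')" for a
    using hM unfolding hermitian_mat_def by blast
  have herm: "hermitian_mat (k*d') ?Y"
    unfolding hermitian_mat_def
  proof (intro conjI Yc eq_matI)
    fix I J assume "I < dim_row ?Y" "J < dim_col ?Y"
    then have I: "I < k*d'" and J: "J < k*d'" using Yc by auto
    have "cadj ?Y $$ (I,J) = cnj (?Y $$ (J,I))" using Yc I J by simp
    also have "\<dots> = (\<Sum>a\<in>F. complex_of_real (t a) * cnj ((cadj (?M a) * X * ?M a) $$ (J,I)))"
      using Yrep[OF J I] by simp
    also have "\<dots> = (\<Sum>a\<in>F. complex_of_real (t a) * (cadj (?M a) * X * ?M a) $$ (I,J))"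
      by (intro sum.cong refl) (simp add: herm_idx[OF hM I J])
    also have "\<dots> = ?Y $$ (I,J)" using Yrep[OF I J] by simp
    finally show "cadj ?Y $$ (I,J) = ?Y $$ (I,J)" .
  qed (use Yc in auto)
  have "0 \<le> Re (map_vec cnj v \<bullet> (?Y *\<^sub>v v))" if v: "v \<in> carrier_vec (k*d')" for v
  proof -
    have "map_vec cnj v \<bullet> (?Y *\<^sub>v v) = (\<Sum>I<k*d'. \<Sum>J<k*d'. cnj (v $ I) * ?Y $$ (I,J) * v $ J)"
      by (rule quad_form[OF Yc v])
    also have "\<dots> = (\<Sum>I<k*d'. \<Sum>J<k*d'. \<Sum>a\<in>F. complex_of_real (t a) * (cnj (v $ I) * (cadj (?M a) * X * ?M a) $$ (I,J) * v $ J))"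
      by (intro sum.cong refl) (simp add: Yrep sum_distrib_left sum_distrib_right ac_simps)
    also have "\<dots> = (\<Sum>a\<in>F. complex_of_real (t a) * (\<Sum>I<k*d'. \<Sum>J<k*d'. cnj (v $ I) * (cadj (?M a) * X * ?M a) $$ (I,J) * v $ J))"
      by (simp add: sum_distrib_left sum.swap[of _ F])
    also have "\<dots> = (\<Sum>a\<in>F. complex_of_real (t a) * (map_vec cnj v \<bullet> ((cadj (?M a) * X * ?M a) *\<^sub>v v)))"
      using quad_form[OF MXMc v] by simp
    finally have "Re (map_vec cnj v \<bullet> (?Y *\<^sub>v v)) = (\<Sum>a\<in>F. t a * Re (map_vec cnj v \<bullet> ((cadj (?M a) * X * ?M a) *\<^sub>v v)))"
      by (simp add: Re_sum)
    also have "\<dots> \<ge> 0"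
      using t congr_psd_quad[OF X kmat_carrier v] by (intro sum_nonneg) auto
    finally show ?thesis .
  qed
  then show ?thesis unfolding psd_mat_def using herm by blast
qed


definition cdiag :: "nat \<Rightarrow> (nat \<Rightarrow> complex) \<Rightarrow> complex mat" where
  "cdiag n c = mat n n (\<lambda>(i,j). if i = j then c i else 0)"

lemma cdiag_carrier[simp]: "cdiag n c \<in> carrier_mat n n"
  by (simp add: cdiag_def)

lemma wdiag_idx:
  assumes U: "U \<in> carrier_mat n n" and a: "a < n" and b: "b < n"
  shows "(U * cdiag n f * cadj U) $$ (a,b) = (\<Sum>j<n. U $$ (a,j) * f j * cnj (U $$ (b,j)))"
proof -
  have "(U * cdiag n f * cadj U) $$ (a,b) = (\<Sum>k<n. \<Sum>l<n. U $$ (a,k) * cdiag n f $$ (k,l) * cadj U $$ (l,b))"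
    by (rule trip_idx[OF U cdiag_carrier cadj_carrier[OF U] a b])
  also have "\<dots> = (\<Sum>k<n. \<Sum>l\<in>{k}. U $$ (a,k) * cdiag n f $$ (k,l) * cadj U $$ (l,b))"
    by (intro sum.cong refl sum.mono_neutral_right) (auto simp: cdiag_def)
  finally show ?thesis using U a b by (simp add: cdiag_def)
qed

definition chan :: "nat \<Rightarrow> nat \<Rightarrow> complex mat \<Rightarrow> complex mat \<Rightarrow> (nat \<Rightarrow> nat \<Rightarrow> real) \<Rightarrow> complex mat \<Rightarrow> complex mat" where
  "chan d d' U W T X = W * cdiag d' (\<lambda>j. \<Sum>i<d. complex_of_real (T j i) * (cadj U * X * U) $$ (i,i)) * cadj W"

lemma chan_form:
  assumes U: "U \<in> carrier_mat d d" and W: "W \<in> carrier_mat d' d'" and X: "X \<in> carrier_mat d d"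
    and b: "b < d'" and b': "b' < d'"
  shows "chan d d' U W T X $$ (b,b') = (\<Sum>a\<in>{..<d}\<times>{..<d'}. complex_of_real (T (snd a) (fst a)) *
      (\<Sum>r<d. \<Sum>s<d. cnj (U $$ (r, fst a) * cnj (W $$ (b, snd a))) * X $$ (r,s) * (U $$ (s, fst a) * cnj (W $$ (b', snd a)))))"
proof -
  have cf: "(cadj U * X * U) $$ (i,i) = (\<Sum>r<d. \<Sum>s<d. cnj (U $$ (r,i)) * X $$ (r,s) * U $$ (s,i))" if i: "i < d" for i
    using trip_idx[OF cadj_carrier[OF U] X U i i] U i by simp
  have "chan d d' U W T X $$ (b,b') = (\<Sum>j<d'. W $$ (b,j) * (\<Sum>i<d. complex_of_real (T j i) * (cadj U * X * U) $$ (i,i)) * cnj (W $$ (b',j)))"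
    unfolding chan_def by (rule wdiag_idx[OF W b b'])
  also have "\<dots> = (\<Sum>j<d'. \<Sum>i<d. complex_of_real (T j i) * (\<Sum>r<d. \<Sum>s<d. cnj (U $$ (r, i) * cnj (W $$ (b, j))) * X $$ (r,s) * (U $$ (s, i) * cnj (W $$ (b', j)))))"
    by (intro sum.cong refl) (simp add: cf sum_distrib_left sum_distrib_right ac_simps)
  also have "\<dots> = (\<Sum>i<d. \<Sum>j<d'. complex_of_real (T j i) * (\<Sum>r<d. \<Sum>s<d. cnj (U $$ (r, i) * cnj (W $$ (b, j))) * X $$ (r,s) * (U $$ (s, i) * cnj (W $$ (b', j)))))"
    by (rule sum.swap)
  also have "\<dots> = (\<Sum>a\<in>{..<d}\<times>{..<d'}. complex_of_real (T (snd a) (fst a)) *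
      (\<Sum>r<d. \<Sum>s<d. cnj (U $$ (r, fst a) * cnj (W $$ (b, snd a))) * X $$ (r,s) * (U $$ (s, fst a) * cnj (W $$ (b', snd a)))))"
    by (subst sum.cartesian_product) (simp add: case_prod_beta)
  finally show ?thesis .
qed

lemma chan_dims[simp]: "dim_row (chan d d' U W T X) = dim_row W" "dim_col (chan d d' U W T X) = dim_row W"
  unfolding chan_def by simp_all

lemma chan_carrier[simp]: "W \<in> carrier_mat d' d' \<Longrightarrow> chan d d' U W T X \<in> carrier_mat d' d'"
  unfolding chan_def by simp

lemma chan_diag:
  assumes U: "unitary_mat d U" and W: "W \<in> carrier_mat d' d'"
  shows "chan d d' U W T (U * real_diag d p * cadj U) = W * real_diag d' (\<lambda>j. \<Sum>i<d. T j i * p i) * cadj W"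
proof -
  have "cadj U * (U * real_diag d p * cadj U) * U = real_diag d p"
    using unconj_by[OF U real_diag_carrier[of d p]] unfolding conj_by_def .
  then have "cdiag d' (\<lambda>j. \<Sum>i<d. complex_of_real (T j i) * (cadj U * (U * real_diag d p * cadj U) * U) $$ (i,i))
      = real_diag d' (\<lambda>j. \<Sum>i<d. T j i * p i)"
    by (intro eq_matI) (auto simp: cdiag_def)
  then show ?thesis unfolding chan_def by simp
qed

lemma chan_channel:
  assumes U: "unitary_mat d U" and W: "unitary_mat d' W"
    and Tnn: "\<And>i j. 0 \<le> T j i" and Tsum: "\<And>i. i < d \<Longrightarrow> (\<Sum>j<d'. T j i) = 1"
  shows "quantum_channel d d' (chan d d' U W T)"
proof -
  have Uc: "U \<in> carrier_mat d d" using U by (rule unitary_carrier)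
  have Wc: "W \<in> carrier_mat d' d'" using W by (rule unitary_carrier)
  let ?E = "chan d d' U W T"
  have add: "?E (A + B) = ?E A + ?E B" if A: "A \<in> carrier_mat d d" and B: "B \<in> carrier_mat d d" for A B
  proof (rule eq_matI)
    fix b b' assume "b < dim_row (?E A + ?E B)" "b' < dim_col (?E A + ?E B)"
    then have b: "b < d'" and b': "b' < d'" using Wc by auto
    have AB: "A + B \<in> carrier_mat d d" using A B by simp
    show "?E (A + B) $$ (b,b') = (?E A + ?E B) $$ (b,b')"
      using chan_form[OF Uc Wc AB b b'] chan_form[OF Uc Wc A b b'] chan_form[OF Uc Wc B b b'] b b' Wc A B
      by (simp add: algebra_simps sum.distrib)
  qed (use Wc in auto)
  have smult: "?E (c \<cdot>\<^sub>m A) = c \<cdot>\<^sub>m ?E A" if A: "A \<in> carrier_mat d d" for A c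
  proof (rule eq_matI)
    fix b b' assume "b < dim_row (c \<cdot>\<^sub>m ?E A)" "b' < dim_col (c \<cdot>\<^sub>m ?E A)"
    then have b: "b < d'" and b': "b' < d'" using Wc by auto
    have cA: "c \<cdot>\<^sub>m A \<in> carrier_mat d d" using A by simp
    show "?E (c \<cdot>\<^sub>m A) $$ (b,b') = (c \<cdot>\<^sub>m ?E A) $$ (b,b')"
      using chan_form[OF Uc Wc cA b b'] chan_form[OF Uc Wc A b b'] b b' Wc A
      by (simp add: sum_distrib_left ac_simps)
  qed (use Wc in auto)
  have tr: "mtrace (?E A) = mtrace A" if A: "A \<in> carrier_mat d d" for A
  proof -
    let ?Y = "cadj U * A * U"
    have Yc: "?Y \<in> carrier_mat d d" using Uc A by simp
    have "mtrace (?E A) = mtrace (cdiag d' (\<lambda>j. \<Sum>i<d. complex_of_real (T j i) * ?Y $$ (i,i)))"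
      unfolding chan_def using mtrace_conj_by[OF W cdiag_carrier] unfolding conj_by_def by simp
    also have "\<dots> = (\<Sum>j<d'. \<Sum>i<d. complex_of_real (T j i) * ?Y $$ (i,i))"
      unfolding mtrace_def by (simp add: cdiag_def)
    also have "\<dots> = (\<Sum>i<d. complex_of_real (\<Sum>j<d'. T j i) * ?Y $$ (i,i))"
      by (subst sum.swap) (simp add: sum_distrib_right)
    also have "\<dots> = (\<Sum>i<d. ?Y $$ (i,i))" by (simp add: Tsum)
    also have "\<dots> = mtrace ?Y"
    proof -
      have "dim_row ?Y = d" using Yc by blast
      then show ?thesis unfolding mtrace_def by (simp only:)
    qed
    also have "\<dots> = mtrace (U * (cadj U * A))"
      using mtrace_comm[of "cadj U * A" d d U] Uc A by simp
    also have "\<dots> = mtrace A" using unitary_cancel2[OF U A] by simp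
    finally show ?thesis .
  qed
  have cp: "psd_mat (k * d') (ampliate d d' k ?E X)" if X: "psd_mat (k * d) X" for k X
  proof (rule kraus_cp[where F = "{..<d}\<times>{..<d'}" and t = "\<lambda>a. T (snd a) (fst a)"
        and K = "\<lambda>a r b. U $$ (r, fst a) * cnj (W $$ (b, snd a))", OF _ _ _ X])
    show "\<forall>X\<in>carrier_mat d d. \<forall>b<d'. \<forall>b'<d'. ?E X $$ (b, b') =
        (\<Sum>a\<in>{..<d} \<times> {..<d'}. complex_of_real (T (snd a) (fst a)) *
           (\<Sum>r<d. \<Sum>s<d. cnj (U $$ (r, fst a) * cnj (W $$ (b, snd a))) * X $$ (r, s) *
                 (U $$ (s, fst a) * cnj (W $$ (b', snd a)))))"
      using chan_form[OF Uc Wc] by blast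
  qed (use Tnn in auto)
  show ?thesis unfolding quantum_channel_def
    using add smult tr cp Wc by auto
qed


lemma cantelli:
  fixes p x :: "nat \<Rightarrow> real"
  assumes p0: "\<And>i. i < n \<Longrightarrow> 0 \<le> p i" and p1: "(\<Sum>i<n. p i) = 1" and e0: "0 < e" and e1: "e < 1"
  defines "D \<equiv> (\<Sum>k<n. p k * x k)"
  defines "V \<equiv> (\<Sum>k<n. p k * (x k)^2) - D^2"
  shows "(\<Sum>i\<in>{i. i < n \<and> x i < D - sqrt (V * (2/e - 1))}. p i) \<le> e/2"
proof -
  let ?S = "{i. i < n \<and> x i < D - sqrt (V * (2/e - 1))}"
  have Sfin: "finite ?S" by simp
  have Ssub: "?S \<subseteq> {..<n}" by auto
  have mom0: "(\<Sum>i<n. p i * (D - x i)) = 0"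
  proof -
    have "(\<Sum>i<n. p i * (D - x i)) = D * (\<Sum>i<n. p i) - (\<Sum>i<n. p i * x i)"
      by (simp add: algebra_simps sum_subtractf sum_distrib_left)
    then show ?thesis using p1 unfolding D_def by simp
  qed
  have mom2: "(\<Sum>i<n. p i * (D - x i)^2) = V"
  proof -
    have "(\<Sum>i<n. p i * (D - x i)^2) = (\<Sum>i<n. p i * (x i)^2) - 2 * D * (\<Sum>i<n. p i * x i) + D^2 * (\<Sum>i<n. p i)"
      by (simp add: power2_eq_square algebra_simps sum_subtractf sum.distrib sum_distrib_left)
    then show ?thesis unfolding V_def D_def[symmetric] p1 by (simp add: power2_eq_square)
  qed
  have V0: "0 \<le> V" unfolding mom2[symmetric] using p0 by (intro sum_nonneg) auto
  have c0: "0 < 2/e - 1" using e0 e1 by (simp add: field_simps)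
  show ?thesis
  proof (cases "V = 0")
    case True
    have all0: "\<forall>i\<in>{..<n}. p i * (D - x i)^2 = 0"
      using mom2 True p0 by (subst sum_nonneg_eq_0_iff[symmetric]) auto
    have "p i * (D - x i)^2 = 0" if "i < n" for i
      using all0 that by auto
    then have "p i = 0" if "i \<in> ?S" for i using that True by force
    then have "(\<Sum>i\<in>?S. p i) = 0" by simp
    then show ?thesis using e0 by simp
  next
    case False
    then have Vp: "0 < V" using V0 by simp
    define t where "t = sqrt (V * (2/e - 1))"
    have tp: "0 < t" unfolding t_def using Vp c0 by simp
    have t2: "t^2 = V * (2/e - 1)" unfolding t_def using Vp c0 by simp
    define u where "u = V / t"
    have up: "0 < u" unfolding u_def using Vp tp by simp
    have "(\<Sum>i\<in>?S. p i) \<le> (\<Sum>i\<in>?S. p i * ((D - x i + u)^2 / (t + u)^2))"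
    proof (rule sum_mono)
      fix i assume i: "i \<in> ?S"
      then have "t < D - x i" unfolding t_def by simp
      then have "t + u \<le> D - x i + u" by simp
      then have "(t + u)^2 \<le> (D - x i + u)^2" using tp up by (intro power_mono) auto
      then have "1 \<le> (D - x i + u)^2 / (t + u)^2" using tp up by simp
      then show "p i \<le> p i * ((D - x i + u)^2 / (t + u)^2)" using p0 i
        by (metis (mono_tags, lifting) mem_Collect_eq mult.right_neutral mult_left_mono)
    qed
    also have "\<dots> \<le> (\<Sum>i<n. p i * ((D - x i + u)^2 / (t + u)^2))"
      by (rule sum_mono2) (use Ssub p0 in auto)
    also have "\<dots> = (\<Sum>i<n. p i * (D - x i + u)^2) / (t + u)^2"
      by (simp add: sum_divide_distrib)
    also have "(\<Sum>i<n. p i * (D - x i + u)^2) = V + u^2"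
    proof -
      have "(\<Sum>i<n. p i * (D - x i + u)^2) = (\<Sum>i<n. p i * (D - x i)^2 + 2 * u * (p i * (D - x i)) + u^2 * p i)"
        by (intro sum.cong refl) (simp add: power2_eq_square algebra_simps)
      also have "\<dots> = (\<Sum>i<n. p i * (D - x i)^2) + 2 * u * (\<Sum>i<n. p i * (D - x i)) + u^2 * (\<Sum>i<n. p i)"
        by (simp add: sum.distrib sum_distrib_left)
      finally have "(\<Sum>i<n. p i * (D - x i + u)^2) = (\<Sum>i<n. p i * (D - x i)^2) + 2 * u * (\<Sum>i<n. p i * (D - x i)) + u^2 * (\<Sum>i<n. p i)" .
      then show ?thesis using mom0 mom2 p1 by simp
    qed
    also have "(V + u^2) / (t + u)^2 = V / (V + t^2)"
    proof -
      have pos: "0 < t^2 + V" using tp Vp by (simp add: add_pos_pos)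
      have h1: "V + u^2 = V * (t^2 + V) / t^2" unfolding u_def using tp by (simp add: field_simps power2_eq_square)
      have h2: "(t + u)^2 = (t^2 + V)^2 / t^2" unfolding u_def using tp by (simp add: field_simps power2_eq_square)
      have dd: "c \<noteq> 0 \<Longrightarrow> (a / c) / (b / c) = a / (b::real)" for a b c by simp
      have "(V * (t^2 + V) / t^2) / ((t^2 + V)^2 / t^2) = V * (t^2 + V) / (t^2 + V)^2"
        by (rule dd) (use tp in simp)
      also have "\<dots> = V / (V + t^2)" using pos by (simp add: power2_eq_square add.commute)
      finally show ?thesis unfolding h1 h2 .
    qed
    also have "\<dots> = e / 2"
      unfolding t2 using Vp e0 by (simp add: field_simps)
    finally show ?thesis unfolding t_def .
  qed
qed


lemma sum_if_split:
  fixes w :: "nat \<Rightarrow> real"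
  assumes "A \<subseteq> {..<n}"
  shows "(\<Sum>i<n. (if i \<in> A then c1 else c2) * w i) = c2 * (\<Sum>i<n. w i) + (c1 - c2) * (\<Sum>i\<in>A. w i)"
proof -
  have "(\<Sum>i<n. (if i \<in> A then c1 else c2) * w i) = (\<Sum>i<n. c2 * w i + (c1 - c2) * (if i \<in> A then w i else 0))"
    by (intro sum.cong refl) (auto simp: algebra_simps)
  also have "\<dots> = c2 * (\<Sum>i<n. w i) + (c1 - c2) * (\<Sum>i<n. (if i \<in> A then w i else 0))"
    by (simp add: sum.distrib sum_distrib_left)
  also have "(\<Sum>i<n. (if i \<in> A then w i else 0)) = (\<Sum>i\<in>A. w i)"
  proof -
    have "{..<n} \<inter> A = A" using assms by auto
    then show ?thesis by (simp add: sum.inter_restrict[symmetric])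
  qed
  finally show ?thesis .
qed

lemma sum_ind:
  fixes w :: "nat \<Rightarrow> real"
  assumes "A \<subseteq> {..<n}"
  shows "(\<Sum>i<n. (if i \<in> A then w i else 0)) = (\<Sum>i\<in>A. w i)"
proof -
  have "{..<n} \<inter> A = A" using assms by auto
  then show ?thesis by (simp add: sum.inter_restrict[symmetric])
qed

lemma classical:
  fixes p q x p' q' x' :: "nat \<Rightarrow> real" and d d' :: nat and e :: real
  assumes p0: "\<And>i. i < d \<Longrightarrow> 0 \<le> p i" and p1: "(\<Sum>i<d. p i) = 1"
    and q0: "\<And>i. i < d \<Longrightarrow> 0 < q i" and q1: "(\<Sum>i<d. q i) = 1"
    and p'0: "\<And>j. j < d' \<Longrightarrow> 0 \<le> p' j" and p'1: "(\<Sum>j<d'. p' j) = 1"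
    and q'0: "\<And>j. j < d' \<Longrightarrow> 0 < q' j" and q'1: "(\<Sum>j<d'. q' j) = 1"
    and hx: "\<And>i. x i = log 2 (p i) - log 2 (q i)" and hx': "\<And>j. x' j = log 2 (p' j) - log 2 (q' j)"
    and e0: "0 < e" and e1: "e < 1"
    and H: "(\<Sum>i<d. p i * x i) - sqrt (((\<Sum>i<d. p i * (x i)^2) - (\<Sum>i<d. p i * x i)^2) * (2/e - 1))
          \<ge> (\<Sum>j<d'. p' j * x' j) + sqrt (((\<Sum>j<d'. p' j * (x' j)^2) - (\<Sum>j<d'. p' j * x' j)^2) * (2/e - 1))"
  shows "\<exists>T. (\<forall>i j. 0 \<le> T j i) \<and> (\<forall>i<d. (\<Sum>j<d'. T j i) = 1) \<and> (\<forall>j<d'. (\<Sum>i<d. T j i * q i) = q' j)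
           \<and> (\<Sum>j<d'. \<bar>p' j - (\<Sum>i<d. T j i * p i)\<bar>) \<le> e"
proof -
  define L where "L = (\<Sum>i<d. p i * x i) - sqrt (((\<Sum>i<d. p i * (x i)^2) - (\<Sum>i<d. p i * x i)^2) * (2/e - 1))"
  define L' where "L' = (\<Sum>j<d'. p' j * x' j) + sqrt (((\<Sum>j<d'. p' j * (x' j)^2) - (\<Sum>j<d'. p' j * x' j)^2) * (2/e - 1))"
  have LL: "L' \<le> L" using H unfolding L_def L'_def by simp
  define A where "A = {i. i < d \<and> 0 < p i \<and> L \<le> x i}"
  define B where "B = {j. j < d' \<and> 0 < p' j \<and> x' j \<le> L'}"
  have Asub: "A \<subseteq> {..<d}" and Bsub: "B \<subseteq> {..<d'}" unfolding A_def B_def by auto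
  define a where "a = (\<Sum>i\<in>A. p i)"
  define b where "b = (\<Sum>i\<in>A. q i)"
  define \<beta> where "\<beta> = (\<Sum>j\<in>B. p' j)"
  have ca: "(\<Sum>i\<in>{i. i < d \<and> x i < L}. p i) \<le> e/2"
    unfolding L_def by (rule cantelli[OF p0 p1 e0 e1])
  have a_ge: "1 - e/2 \<le> a"
  proof -
    have "(\<Sum>i<d. p i) \<le> (\<Sum>i<d. (if i \<in> A then p i else 0) + (if i \<in> {i. i < d \<and> x i < L} then p i else 0))"
      by (rule sum_mono) (use p0 in \<open>auto simp: A_def\<close>)
    also have "\<dots> = a + (\<Sum>i\<in>{i. i < d \<and> x i < L}. p i)"
    proof -
      have Ssub: "{i. i < d \<and> x i < L} \<subseteq> {..<d}" by auto
      show ?thesis unfolding a_def sum.distrib sum_ind[OF Asub] sum_ind[OF Ssub] ..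
    qed
    finally show ?thesis using ca p1 by simp
  qed
  have cb: "(\<Sum>j\<in>{j. j < d' \<and> - x' j < (\<Sum>k<d'. p' k * - x' k) - sqrt (((\<Sum>k<d'. p' k * (- x' k)^2) - (\<Sum>k<d'. p' k * - x' k)^2) * (2/e - 1))}. p' j) \<le> e/2"
    by (rule cantelli[OF p'0 p'1 e0 e1])
  have setB: "{j. j < d' \<and> - x' j < (\<Sum>k<d'. p' k * - x' k) - sqrt (((\<Sum>k<d'. p' k * (- x' k)^2) - (\<Sum>k<d'. p' k * - x' k)^2) * (2/e - 1))}
      = {j. j < d' \<and> L' < x' j}"
    unfolding L'_def by (auto simp: sum_negf)
  have b_ge: "1 - e/2 \<le> \<beta>"
  proof -
    have "(\<Sum>j<d'. p' j) \<le> (\<Sum>j<d'. (if j \<in> B then p' j else 0) + (if j \<in> {j. j < d' \<and> L' < x' j} then p' j else 0))"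
      by (rule sum_mono) (use p'0 in \<open>auto simp: B_def\<close>)
    also have "\<dots> = \<beta> + (\<Sum>j\<in>{j. j < d' \<and> L' < x' j}. p' j)"
    proof -
      have Ssub: "{j. j < d' \<and> L' < x' j} \<subseteq> {..<d'}" by auto
      show ?thesis unfolding \<beta>_def sum.distrib sum_ind[OF Bsub] sum_ind[OF Ssub] ..
    qed
    finally show ?thesis using cb setB p'1 by simp
  qed
  have qA: "q i \<le> p i * 2 powr (- L)" if i: "i \<in> A" for i
  proof -
    have id: "i < d" "0 < p i" "L \<le> x i" using i unfolding A_def by auto
    have qi: "0 < q i" using q0 id by simp
    have "L \<le> log 2 (p i / q i)" using id(3) hx[of i] id(2) qi by (simp add: log_divide)
    then have "2 powr L \<le> p i / q i" using id(2) qi by (simp add: le_log_iff)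
    then have "q i * 2 powr L \<le> p i" using qi by (simp add: field_simps)
    then have "q i * 2 powr L * 2 powr (- L) \<le> p i * 2 powr (- L)" by (simp add: mult_right_mono)
    then show ?thesis by (simp add: mult.assoc powr_add[symmetric])
  qed
  have pB: "p' j \<le> 2 powr L' * q' j" if j: "j \<in> B" for j
  proof -
    have jd: "j < d'" "0 < p' j" "x' j \<le> L'" using j unfolding B_def by auto
    have qj: "0 < q' j" using q'0 jd by simp
    have "log 2 (p' j / q' j) \<le> L'" using jd(3) hx'[of j] jd(2) qj by (simp add: log_divide)
    then have "p' j / q' j \<le> 2 powr L'" using jd(2) qj by (simp add: log_le_iff)
    then show ?thesis using qj by (simp add: field_simps)
  qed
  have a_le: "a \<le> 1"
  proof -
    have "a \<le> (\<Sum>i<d. p i)" unfolding a_def by (rule sum_mono2) (use Asub p0 in auto)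
    then show ?thesis using p1 by simp
  qed
  have b0: "0 \<le> b" unfolding b_def using Asub q0 by (intro sum_nonneg) (auto simp: less_imp_le)
  have b_le: "b \<le> a * 2 powr (- L)"
    unfolding b_def a_def sum_distrib_right by (rule sum_mono) (rule qA)
  have \<beta>_le: "\<beta> \<le> 1"
  proof -
    have "\<beta> \<le> (\<Sum>j<d'. p' j)" unfolding \<beta>_def by (rule sum_mono2) (use Bsub p'0 in auto)
    then show ?thesis using p'1 by simp
  qed
  have ha: "0 < 1 - e/2" using e1 by simp
  have a_pos: "0 < a" using a_ge ha by linarith
  have \<beta>_pos: "0 < \<beta>" using b_ge ha by linarith
  define as where "as = min a \<beta>"
  have as_pos: "0 < as" and as_le_a: "as \<le> a" and as_le_b: "as \<le> \<beta>" and as_ge: "1 - e/2 \<le> as"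
    unfolding as_def using a_pos \<beta>_pos a_ge b_ge by auto
  define \<kappa> where "\<kappa> = as / a"
  have k_pos: "0 < \<kappa>" and k_le: "\<kappa> \<le> 1" unfolding \<kappa>_def using as_pos a_pos as_le_a by auto
  have ka: "\<kappa> * a = as" unfolding \<kappa>_def using a_pos by simp
  define bs where "bs = \<kappa> * b"
  have bs0: "0 \<le> bs" unfolding bs_def using k_pos b0 by simp
  define \<pi> where "\<pi> = (\<lambda>j. if j \<in> B then p' j / \<beta> else 0)"
  have pi0: "0 \<le> \<pi> j" if "j < d'" for j unfolding \<pi>_def using p'0 that \<beta>_pos by simp
  have pi1: "(\<Sum>j<d'. \<pi> j) = 1"
  proof -
    have "(\<Sum>j<d'. \<pi> j) = (\<Sum>j<d'. (if j \<in> B then p' j else 0) / \<beta>)"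
      unfolding \<pi>_def by (intro sum.cong refl) auto
    also have "\<dots> = \<beta> / \<beta>" unfolding sum_divide_distrib[symmetric] sum_ind[OF Bsub] \<beta>_def ..
    finally show ?thesis using \<beta>_pos by simp
  qed
  have bpi: "bs * \<pi> j \<le> q' j" if j: "j < d'" for j
  proof (cases "j \<in> B")
    case False
    then show ?thesis unfolding \<pi>_def using q'0 j by (simp add: less_imp_le)
  next
    case True
    have pj: "0 \<le> p' j" using p'0 j by simp
    have "bs * \<pi> j = \<kappa> * b * p' j / \<beta>" unfolding bs_def \<pi>_def using True by simp
    also have "\<dots> \<le> \<kappa> * (a * 2 powr (- L)) * p' j / \<beta>"
      using b_le k_pos pj \<beta>_pos by (intro divide_right_mono mult_right_mono mult_left_mono) auto
    also have "\<dots> = as * 2 powr (- L) * p' j / \<beta>" using ka by (simp add: mult.assoc[symmetric])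
    also have "\<dots> \<le> \<beta> * 2 powr (- L) * p' j / \<beta>"
      using as_le_b pj \<beta>_pos by (intro divide_right_mono mult_right_mono) auto
    also have "\<dots> = 2 powr (- L) * p' j" using \<beta>_pos by simp
    also have "\<dots> \<le> 2 powr (- L) * (2 powr L' * q' j)" using pB[OF True] by (simp add: mult_left_mono)
    also have "\<dots> = 2 powr (L' - L) * q' j" by (simp add: powr_add[symmetric] mult.assoc[symmetric])
    also have "\<dots> \<le> 1 * q' j"
    proof -
      have "2 powr (L' - L) \<le> 2 powr 0" by (rule powr_mono) (use LL in auto)
      then show ?thesis using q'0[OF j] by (intro mult_right_mono) auto
    qed
    finally show ?thesis by simp
  qed
  have bs_le: "bs \<le> 1"
  proof -
    have "b \<le> (\<Sum>i<d. q i)" unfolding b_def by (rule sum_mono2) (use Asub q0 in \<open>auto simp: less_imp_le\<close>)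
    then have "b \<le> 1" using q1 by simp
    then show ?thesis unfolding bs_def using k_le b0 k_pos by (simp add: mult_le_one)
  qed
  define \<rho> where "\<rho> = (\<lambda>j. if bs < 1 then (q' j - bs * \<pi> j) / (1 - bs) else q' j)"
  have rho0: "0 \<le> \<rho> j" if j: "j < d'" for j
    unfolding \<rho>_def using bpi[OF j] q'0[OF j] by auto
  have rho1: "(\<Sum>j<d'. \<rho> j) = 1"
  proof (cases "bs < 1")
    case True
    have "(\<Sum>j<d'. \<rho> j) = (\<Sum>j<d'. q' j - bs * \<pi> j) / (1 - bs)"
      unfolding \<rho>_def using True by (simp add: sum_divide_distrib)
    also have "\<dots> = (1 - bs) / (1 - bs)" by (simp add: sum_subtractf sum_distrib_left[symmetric] q'1 pi1)
    finally show ?thesis using True by simp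
  next
    case False
    then show ?thesis unfolding \<rho>_def using q'1 by simp
  qed
  have mix: "bs * \<pi> j + (1 - bs) * \<rho> j = q' j" if j: "j < d'" for j
  proof (cases "bs < 1")
    case True
    then show ?thesis unfolding \<rho>_def by simp
  next
    case False
    then have bs1: "bs = 1" using bs_le by simp
    have le: "\<pi> k \<le> q' k" if "k < d'" for k using bpi[OF that] bs1 by simp
    have "(\<Sum>k<d'. q' k - \<pi> k) = 0" using q'1 pi1 by (simp add: sum_subtractf)
    then have "\<forall>k\<in>{..<d'}. q' k - \<pi> k = 0"
      using le by (subst sum_nonneg_eq_0_iff[symmetric]) auto
    then show ?thesis using bs1 j by simp
  qed
  define T where "T = (\<lambda>j i. if j < d' then (if i \<in> A then \<kappa> * \<pi> j + (1 - \<kappa>) * \<rho> j else \<rho> j) else 0)"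
  have T0: "\<forall>i j. 0 \<le> T j i"
    unfolding T_def using pi0 rho0 k_pos k_le by auto
  have Tsum: "\<forall>i<d. (\<Sum>j<d'. T j i) = 1"
  proof (intro allI impI)
    fix i assume "i < d"
    have "(\<Sum>j<d'. T j i) = (\<Sum>j<d'. if i \<in> A then \<kappa> * \<pi> j + (1 - \<kappa>) * \<rho> j else \<rho> j)"
      unfolding T_def by (intro sum.cong refl) auto
    also have "\<dots> = 1"
      by (cases "i \<in> A") (simp_all add: sum.distrib sum_distrib_left[symmetric] pi1 rho1)
    finally show "(\<Sum>j<d'. T j i) = 1" .
  qed
  have Tw: "(\<Sum>i<d. T j i * w i) = \<rho> j + (\<pi> j - \<rho> j) * (\<kappa> * (\<Sum>i\<in>A. w i))"
    if j: "j < d'" and w1: "(\<Sum>i<d. w i) = 1" for j w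
  proof -
    have "(\<Sum>i<d. T j i * w i) = (\<Sum>i<d. (if i \<in> A then \<kappa> * \<pi> j + (1 - \<kappa>) * \<rho> j else \<rho> j) * w i)"
      unfolding T_def using j by simp
    also have "\<dots> = \<rho> j * (\<Sum>i<d. w i) + ((\<kappa> * \<pi> j + (1 - \<kappa>) * \<rho> j) - \<rho> j) * (\<Sum>i\<in>A. w i)"
      by (rule sum_if_split[OF Asub])
    finally show ?thesis using w1 by (simp add: algebra_simps)
  qed
  have Tq: "\<forall>j<d'. (\<Sum>i<d. T j i * q i) = q' j"
  proof (intro allI impI)
    fix j assume j: "j < d'"
    have "(\<Sum>i<d. T j i * q i) = \<rho> j + (\<pi> j - \<rho> j) * bs"
      using Tw[OF j q1] unfolding bs_def b_def by simp
    also have "\<dots> = bs * \<pi> j + (1 - bs) * \<rho> j" by (simp add: algebra_simps)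
    finally show "(\<Sum>i<d. T j i * q i) = q' j" using mix[OF j] by simp
  qed
  define r where "r = (\<lambda>j. as * \<pi> j + (1 - as) * \<rho> j)"
  have Tp: "(\<Sum>i<d. T j i * p i) = r j" if j: "j < d'" for j
  proof -
    have "(\<Sum>i<d. T j i * p i) = \<rho> j + (\<pi> j - \<rho> j) * as"
      using Tw[OF j p1] unfolding a_def[symmetric] ka by simp
    then show ?thesis unfolding r_def by (simp add: algebra_simps)
  qed
  have as_le1: "as \<le> 1" using as_le_a a_le by simp
  have r1: "(\<Sum>j<d'. r j) = 1"
    unfolding r_def by (simp add: sum.distrib sum_distrib_left[symmetric] pi1 rho1)
  define g where "g = (\<lambda>j. p' j - (as / \<beta>) * (if j \<in> B then p' j else 0))"
  have g_bound: "max (p' j - r j) 0 \<le> g j" if j: "j < d'" for j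
  proof -
    have "as * \<pi> j \<le> r j" unfolding r_def using rho0[OF j] as_le1 by simp
    moreover have "as * \<pi> j = (as / \<beta>) * (if j \<in> B then p' j else 0)" unfolding \<pi>_def by simp
    moreover have "0 \<le> g j"
    proof (cases "j \<in> B")
      case True
      have "as / \<beta> \<le> 1" using as_le_b \<beta>_pos by simp
      then have "(as / \<beta>) * p' j \<le> 1 * p' j" using p'0[OF j] by (intro mult_right_mono) auto
      then show ?thesis unfolding g_def using True by simp
    next
      case False
      then show ?thesis unfolding g_def using p'0[OF j] by simp
    qed
    ultimately show ?thesis unfolding g_def by simp
  qed
  have gsum: "(\<Sum>j<d'. g j) = 1 - as"
  proof -
    have "(\<Sum>j<d'. g j) = (\<Sum>j<d'. p' j) - (as / \<beta>) * (\<Sum>j<d'. if j \<in> B then p' j else 0)"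
      unfolding g_def by (simp add: sum_subtractf sum_distrib_left)
    also have "\<dots> = 1 - as" unfolding sum_ind[OF Bsub] \<beta>_def[symmetric] p'1 using \<beta>_pos by simp
    finally show ?thesis .
  qed
  have "(\<Sum>j<d'. \<bar>p' j - r j\<bar>) = (\<Sum>j<d'. 2 * max (p' j - r j) 0 - (p' j - r j))"
    by (intro sum.cong refl) (simp add: abs_if max_def)
  also have "\<dots> = 2 * (\<Sum>j<d'. max (p' j - r j) 0)"
    by (simp add: sum_subtractf sum_distrib_left[symmetric] p'1 r1)
  also have "\<dots> \<le> 2 * (\<Sum>j<d'. g j)"
    using g_bound by (intro mult_left_mono sum_mono) auto
  also have "\<dots> \<le> e" using gsum as_ge by simp
  finally have tv: "(\<Sum>j<d'. \<bar>p' j - r j\<bar>) \<le> e" .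
  have "(\<Sum>j<d'. \<bar>p' j - (\<Sum>i<d. T j i * p i)\<bar>) = (\<Sum>j<d'. \<bar>p' j - r j\<bar>)"
    by (intro sum.cong refl) (simp add: Tp)
  then show ?thesis using T0 Tsum Tq tv by (intro exI[of _ T]) simp
qed


lemma density_facts:
  assumes dens: "density_mat n A" and U: "unitary_mat n U" and A: "A = U * real_diag n p * cadj U"
  shows "\<And>i. i < n \<Longrightarrow> 0 \<le> p i" and "(\<Sum>i<n. p i) = 1"
proof -
  have psd: "psd_mat n A" and tr: "mtrace A = 1" using dens unfolding density_mat_def by auto
  show "\<And>i. i < n \<Longrightarrow> 0 \<le> p i" using diag_nonneg_of_psd[OF U psd A] by blast
  have "complex_of_real (\<Sum>i<n. p i) = 1" using trace_of_diag[OF U A] tr by simp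
  then show "(\<Sum>i<n. p i) = 1" by (metis of_real_eq_1_iff)
qed

lemma real_diag_cong: "(\<And>j. j < n \<Longrightarrow> f j = g j) \<Longrightarrow> real_diag n f = real_diag n g"
  by (rule eq_matI) auto

theorem theorem8:
  fixes d d' :: nat and \<rho> \<sigma> \<rho>' \<sigma>' :: "complex mat" and \<epsilon> :: real
  assumes "density_mat d \<rho>" and "density_mat d \<sigma>"
    and "\<rho> * \<sigma> = \<sigma> * \<rho>"
    and "density_mat d' \<rho>'" and "density_mat d' \<sigma>'"
    and "\<rho>' * \<sigma>' = \<sigma>' * \<rho>'"
    and "invertible_mat \<sigma>" and "invertible_mat \<sigma>'"
    and "0 < \<epsilon>" and "\<epsilon> < 1"
    and "rel_entropy \<rho> \<sigma> - f_dev \<rho> \<sigma> \<epsilon> \<ge> rel_entropy \<rho>' \<sigma>' + f_dev \<rho>' \<sigma>' \<epsilon>"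
  shows "pair_majorizes_approx d d' \<epsilon> \<rho> \<sigma> \<rho>' \<sigma>'"
proof -
  note dr = assms(1) and ds = assms(2) and com = assms(3) and dr' = assms(4) and ds' = assms(5)
    and com' = assms(6) and inv = assms(7) and inv' = assms(8) and e0 = assms(9) and e1 = assms(10)
    and H = assms(11)
  have herm: "hermitian_mat n A" if "density_mat n A" for n A
    using that unfolding density_mat_def psd_mat_def by auto
  obtain U p q where U: "unitary_mat d U" and r: "\<rho> = U * real_diag d p * cadj U"
    and s: "\<sigma> = U * real_diag d q * cadj U"
    using simult_diag[OF herm[OF dr] herm[OF ds] com] by blast
  obtain W p' q' where W: "unitary_mat d' W" and r': "\<rho>' = W * real_diag d' p' * cadj W"
    and s': "\<sigma>' = W * real_diag d' q' * cadj W"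
    using simult_diag[OF herm[OF dr'] herm[OF ds'] com'] by blast
  have Wc: "W \<in> carrier_mat d' d'" using W by (rule unitary_carrier)
  note pf = density_facts[OF dr U r] and qf = density_facts[OF ds U s]
  note pf' = density_facts[OF dr' W r'] and qf' = density_facts[OF ds' W s']
  have qpos: "0 < q i" if "i < d" for i
    using qf(1)[OF that] diag_pos_of_invertible[OF U inv s that] by simp
  have qpos': "0 < q' j" if "j < d'" for j
    using qf'(1)[OF that] diag_pos_of_invertible[OF W inv' s' that] by simp
  define x where "x = (\<lambda>i. log 2 (p i) - log 2 (q i))"
  define x' where "x' = (\<lambda>j. log 2 (p' j) - log 2 (q' j))"
  have fd: "f_dev \<rho> \<sigma> \<epsilon> = sqrt (((\<Sum>i<d. p i * (x i)^2) - (\<Sum>i<d. p i * x i)^2) * (2/\<epsilon> - 1))"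
    unfolding f_dev_def entropy_formula(2)[OF U r s] x_def ..
  have fd': "f_dev \<rho>' \<sigma>' \<epsilon> = sqrt (((\<Sum>j<d'. p' j * (x' j)^2) - (\<Sum>j<d'. p' j * x' j)^2) * (2/\<epsilon> - 1))"
    unfolding f_dev_def entropy_formula(2)[OF W r' s'] x'_def ..
  have H': "(\<Sum>i<d. p i * x i) - sqrt (((\<Sum>i<d. p i * (x i)^2) - (\<Sum>i<d. p i * x i)^2) * (2/\<epsilon> - 1))
          \<ge> (\<Sum>j<d'. p' j * x' j) + sqrt (((\<Sum>j<d'. p' j * (x' j)^2) - (\<Sum>j<d'. p' j * x' j)^2) * (2/\<epsilon> - 1))"
    using H unfolding fd fd' entropy_formula(1)[OF U r s] entropy_formula(1)[OF W r' s'] x_def x'_def .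
  obtain T where T0: "\<forall>i j. 0 \<le> T j i" and Tsum: "\<forall>i<d. (\<Sum>j<d'. T j i) = 1"
    and Tq: "\<forall>j<d'. (\<Sum>i<d. T j i * q i) = q' j"
    and tv: "(\<Sum>j<d'. \<bar>p' j - (\<Sum>i<d. T j i * p i)\<bar>) \<le> \<epsilon>"
  proof -
    have hx: "\<And>i. x i = log 2 (p i) - log 2 (q i)" by (simp add: x_def)
    have hx': "\<And>j. x' j = log 2 (p' j) - log 2 (q' j)" by (simp add: x'_def)
    show ?thesis using classical[OF pf(1) pf(2) qpos qf(2) pf'(1) pf'(2) qpos' qf'(2) hx hx' e0 e1 H'] that by blast
  qed
  define E where "E = chan d d' U W T"
  define rr where "rr = (\<lambda>j. \<Sum>i<d. T j i * p i)"
  define \<rho>e where "\<rho>e = W * real_diag d' rr * cadj W"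
  have ch: "quantum_channel d d' E"
    unfolding E_def by (rule chan_channel[OF U W]) (use T0 Tsum in auto)
  have Er: "E \<rho> = \<rho>e" unfolding E_def \<rho>e_def rr_def r by (rule chan_diag[OF U Wc])
  have Es: "E \<sigma> = \<sigma>'"
  proof -
    have "E \<sigma> = W * real_diag d' (\<lambda>j. \<Sum>i<d. T j i * q i) * cadj W"
      unfolding E_def s by (rule chan_diag[OF U Wc])
    also have "real_diag d' (\<lambda>j. \<Sum>i<d. T j i * q i) = real_diag d' q'"
      by (rule real_diag_cong) (use Tq in auto)
    finally show ?thesis using s' by simp
  qed
  have rr0: "0 \<le> rr j" if "j < d'" for j unfolding rr_def using T0 pf(1) by (intro sum_nonneg) auto
  have rr1: "(\<Sum>j<d'. rr j) = 1"
  proof -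
    have "(\<Sum>j<d'. rr j) = (\<Sum>i<d. (\<Sum>j<d'. T j i) * p i)"
      unfolding rr_def by (subst sum.swap) (simp add: sum_distrib_right)
    also have "\<dots> = (\<Sum>i<d. p i)" using Tsum by simp
    finally show ?thesis using pf(2) by simp
  qed
  have dens_e: "density_mat d' \<rho>e" unfolding \<rho>e_def by (rule density_diag[OF W rr0 rr1])
  have "trace_dist \<rho>' \<rho>e = (\<Sum>j<d'. \<bar>p' j - rr j\<bar>) / 2"
    by (rule trace_dist_formula[OF W r' \<rho>e_def])
  also have "\<dots> \<le> \<epsilon> / 2" using tv unfolding rr_def by simp
  also have "\<dots> \<le> \<epsilon>" using e0 by simp
  finally have td: "trace_dist \<rho>' \<rho>e \<le> \<epsilon>" .
  show ?thesis
    unfolding pair_majorizes_approx_def pair_majorizes_def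
    using dens_e ch Er Es td by blast
qed


end
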